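(* Let $\mathcal{A}$ be a C*-algebra with identity $1$, let $\Gamma$ be a totally ordered abelian group with identity $0$ and positive cone $\Gamma^+=\{x\in\Gamma:0\le x\}$, and let $\alpha:\Gamma^+\to\mathrm{End}(\mathcal{A})$ be a semigroup homomorphism into the $*$-endomorphisms of $\mathcal{A}$ (so $\alpha_0=\mathrm{Id}$ and $\alpha_x\circ\alpha_y=\alpha_{x+y}$ for $x,y\in\Gamma^+$). The following are equivalent: 1) there exists a complete transfer action $L$ for $(\mathcal{A},\Gamma^+,\alpha)$; 2) (i) there exists a non-degenerate transfer action $L$ for $(\mathcal{A},\Gamma^+,\alpha)$, and (ii) $\alpha_x(\mathcal{A})$ is a hereditary subalgebra of $\mathcal{A}$ for each $x\in\Gamma^+$; 3) (i) there exists a family $\{P_x\}_{x\in\Gamma^+}$ of central orthogonal projections in $\mathcal{A}$ such that (a) $\alpha_x(P_{x+y})=\alpha_x(1)P_y$ for all $x,y\in\Gamma^+$, and (b) the maps $\alpha_x:P_x\mathcal{A}\to\alpha_x(\mathcal{A})$ are $*$-isomorphisms; and (ii) $\alpha_x(\mathcal{A})=\alpha_x(1)\mathcal{A}\alpha_x(1)$ for each $x\in\Gamma^+$. Moreover, the objects in 1)–3) are uniquely determined (the transfer action $L$ in 1) and 2) is unique, and the family $\{P_x\}_{x\in\Gamma^+}$ in 3) is unique), and they are related by $P_x=L_x(1)$ for $x\in\Gamma^+$ and $$L_x(a)=\alpha_x^{-1}(\alpha_x(1)a\alpha_x(1)),\quad a\in\mathcal{A},$$ where $\alpha_x^{-1}:\alpha_x(\mathcal{A})\to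 P_x\mathcal{A}$ is the inverse of the $*$-isomorphism $\alpha_x:P_x\mathcal{A}\to\alpha_x(\mathcal{A})$.
   Context: A transfer action for $(\mathcal{A},\Gamma^+,\alpha)$ is a family $L=\{L_x\}_{x\in\Gamma^+}$ of continuous, linear, positive maps $L_x:\mathcal{A}\to\mathcal{A}$ such that $L_{x+y}=L_y\circ L_x$ for all $x,y\in\Gamma^+$ and $L_x(\alpha_x(a)b)=aL_x(b)$ for all $a,b\in\mathcal{A}$, $x\in\Gamma^+$. A transfer action is non-degenerate if for each $x\in\Gamma^+$ the composition $\alpha_x\circ L_x$ is a conditional expectation onto $\alpha_x(\mathcal{A})$ (equivalently $\alpha_x\circ L_x\circ\alpha_x=\alpha_x$, equivalently $\alpha_x(L_x(1))=\alpha_x(1)$). A transfer action is complete if $\alpha_x(L_x(a))=\alpha_x(1)a\alpha_x(1)$ for all $x\in\Gamma^+$, $a\in\mathcal{A}$. *)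

theory Defs
  imports "HOL-Analysis.Analysis"
begin

class cstar_algebra = real_normed_algebra_1 + banach +
  fixes cscale :: "complex \<Rightarrow> 'a \<Rightarrow> 'a" (infixr "*\<^sub>C" 75)
    and cstar :: "'a \<Rightarrow> 'a"
  assumes cscale_of_real: "complex_of_real r *\<^sub>C a = r *\<^sub>R a"
    and cscale_add_right: "c *\<^sub>C (a + b) = c *\<^sub>C a + c *\<^sub>C b"
    and cscale_add_left: "(c + d) *\<^sub>C a = c *\<^sub>C a + d *\<^sub>C a"
    and cscale_cscale: "c *\<^sub>C (d *\<^sub>C a) = (c * d) *\<^sub>C a"
    and cscale_mult_left: "(c *\<^sub>C a) * b = c *\<^sub>C (a * b)"
    and cscale_mult_right: "a * (c *\<^sub>C b) = c *\<^sub>C (a * b)"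
    and norm_cscale: "norm (c *\<^sub>C a) = cmod c * norm a"
    and cstar_cstar: "cstar (cstar a) = a"
    and cstar_add: "cstar (a + b) = cstar a + cstar b"
    and cstar_cscale: "cstar (c *\<^sub>C a) = cnj c *\<^sub>C cstar a"
    and cstar_mult: "cstar (a * b) = cstar b * cstar a"
    and cstar_identity: "norm (cstar a * a) = norm a * norm a"

definition clinear_map :: "('a::cstar_algebra \<Rightarrow> 'a) \<Rightarrow> bool" where
  "clinear_map f \<longleftrightarrow> (\<forall>a b. f (a + b) = f a + f b) \<and> (\<forall>c a. f (c *\<^sub>C a) = c *\<^sub>C f a)"

definition positive_el :: "'a::cstar_algebra \<Rightarrow> bool" where
  "positive_el a \<longleftrightarrow> (\<exists>b. a = cstar b * b)"

definition positive_map :: "('a::cstar_algebra \<Rightarrow> 'a) \<Rightarrow> bool" where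
  "positive_map f \<longleftrightarrow> (\<forall>a. positive_el a \<longrightarrow> positive_el (f a))"

definition star_endo :: "('a::cstar_algebra \<Rightarrow> 'a) \<Rightarrow> bool" where
  "star_endo f \<longleftrightarrow> clinear_map f \<and> (\<forall>a b. f (a * b) = f a * f b)
     \<and> (\<forall>a. f (cstar a) = cstar (f a))"

definition endo_semigroup :: "('g::linordered_ab_group_add \<Rightarrow> 'a::cstar_algebra \<Rightarrow> 'a) \<Rightarrow> bool" where
  "endo_semigroup \<alpha> \<longleftrightarrow> (\<forall>x. 0 \<le> x \<longrightarrow> star_endo (\<alpha> x)) \<and> \<alpha> 0 = id
     \<and> (\<forall>x y. 0 \<le> x \<longrightarrow> 0 \<le> y \<longrightarrow> \<alpha> x \<circ> \<alpha> y = \<alpha> (x + y))"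

definition transfer_action ::
  "('g::linordered_ab_group_add \<Rightarrow> 'a::cstar_algebra \<Rightarrow> 'a) \<Rightarrow> ('g \<Rightarrow> 'a \<Rightarrow> 'a) \<Rightarrow> bool" where
  "transfer_action \<alpha> L \<longleftrightarrow>
     (\<forall>x. 0 \<le> x \<longrightarrow> continuous_on UNIV (L x) \<and> clinear_map (L x) \<and> positive_map (L x))
   \<and> (\<forall>x y. 0 \<le> x \<longrightarrow> 0 \<le> y \<longrightarrow> L (x + y) = L y \<circ> L x)
   \<and> (\<forall>x a b. 0 \<le> x \<longrightarrow> L x (\<alpha> x a * b) = a * L x b)"

text \<open>Non-degenerate: \<alpha>_x \<circ> L_x \<circ> \<alpha>_x = \<alpha>_x (one of the equivalent forms given in the paper).\<close>
definition nondegenerate_transfer_action ::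
  "('g::linordered_ab_group_add \<Rightarrow> 'a::cstar_algebra \<Rightarrow> 'a) \<Rightarrow> ('g \<Rightarrow> 'a \<Rightarrow> 'a) \<Rightarrow> bool" where
  "nondegenerate_transfer_action \<alpha> L \<longleftrightarrow> transfer_action \<alpha> L
     \<and> (\<forall>x. 0 \<le> x \<longrightarrow> \<alpha> x \<circ> L x \<circ> \<alpha> x = \<alpha> x)"

definition complete_transfer_action ::
  "('g::linordered_ab_group_add \<Rightarrow> 'a::cstar_algebra \<Rightarrow> 'a) \<Rightarrow> ('g \<Rightarrow> 'a \<Rightarrow> 'a) \<Rightarrow> bool" where
  "complete_transfer_action \<alpha> L \<longleftrightarrow> transfer_action \<alpha> L
     \<and> (\<forall>x a. 0 \<le> x \<longrightarrow> \<alpha> x (L x a) = \<alpha> x 1 * a * \<alpha> x 1)"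

definition cstar_subalgebra :: "'a::cstar_algebra set \<Rightarrow> bool" where
  "cstar_subalgebra B \<longleftrightarrow> 0 \<in> B \<and> (\<forall>a\<in>B. \<forall>b\<in>B. a + b \<in> B \<and> a * b \<in> B)
     \<and> (\<forall>c. \<forall>a\<in>B. c *\<^sub>C a \<in> B) \<and> (\<forall>a\<in>B. cstar a \<in> B) \<and> closed B"

definition hereditary_subalgebra :: "'a::cstar_algebra set \<Rightarrow> bool" where
  "hereditary_subalgebra B \<longleftrightarrow> cstar_subalgebra B
     \<and> (\<forall>a b. b \<in> B \<longrightarrow> positive_el a \<longrightarrow> positive_el (b - a) \<longrightarrow> a \<in> B)"

definition central_projection :: "'a::cstar_algebra \<Rightarrow> bool" where
  "central_projection p \<longleftrightarrow> cstar p = p \<and> p * p = p \<and> (\<forall>a. p * a = a * p)"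

text \<open>Condition 3(i): central projections P_x with \<alpha>_x(P_{x+y}) = \<alpha>_x(1) P_y and
  \<alpha>_x : P_x A \<rightarrow> \<alpha>_x(A) bijective (it is a *-homomorphism as a restriction of \<alpha>_x).\<close>
definition projection_family ::
  "('g::linordered_ab_group_add \<Rightarrow> 'a::cstar_algebra \<Rightarrow> 'a) \<Rightarrow> ('g \<Rightarrow> 'a) \<Rightarrow> bool" where
  "projection_family \<alpha> P \<longleftrightarrow> (\<forall>x. 0 \<le> x \<longrightarrow> central_projection (P x))
     \<and> (\<forall>x y. 0 \<le> x \<longrightarrow> 0 \<le> y \<longrightarrow> \<alpha> x (P (x + y)) = \<alpha> x 1 * P y)
     \<and> (\<forall>x. 0 \<le> x \<longrightarrow> bij_betw (\<alpha> x) (range (\<lambda>a. P x * a)) (range (\<alpha> x)))"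

end

theory Submission
  imports Defs "HOL-Computational_Algebra.Formal_Power_Series"
begin


lemma cstar_zero [simp]: "cstar (0::'a::cstar_algebra) = 0"
proof -
  have "cstar (0 + 0::'a) = cstar 0 + cstar 0" by (rule cstar_add)
  then show ?thesis by simp
qed

lemma cstar_minus [simp]: "cstar (- a::'a::cstar_algebra) = - cstar a"
proof -
  have "cstar (a + - a) = cstar a + cstar (- a)" by (rule cstar_add)
  then show ?thesis by (simp add: eq_neg_iff_add_eq_0 add.commute)
qed

lemma cstar_diff [simp]: "cstar (a - b::'a::cstar_algebra) = cstar a - cstar b"
  using cstar_add[of a "- b"] by simp

lemma cstar_cstar' [simp]: "cstar (cstar a) = (a::'a::cstar_algebra)"
  by (rule cstar_cstar)

lemma cstar_add' [simp]: "cstar (a + b) = cstar a + cstar (b::'a::cstar_algebra)"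
  by (rule cstar_add)

lemma cstar_mult' [simp]: "cstar (a * b) = cstar b * cstar (a::'a::cstar_algebra)"
  by (rule cstar_mult)

lemma cstar_one [simp]: "cstar (1::'a::cstar_algebra) = 1"
proof -
  have "cstar (cstar 1 * (1::'a)) = cstar 1 * cstar (cstar 1)" by (rule cstar_mult)
  then show ?thesis by simp
qed

lemma cscale_zero_left [simp]: "(0::complex) *\<^sub>C (a::'a::cstar_algebra) = 0"
  using cscale_of_real[of 0 a] by simp

lemma cscale_minus_left: "(- c) *\<^sub>C (a::'a::cstar_algebra) = - (c *\<^sub>C a)"
proof -
  have "(c + - c) *\<^sub>C a = c *\<^sub>C a + (- c) *\<^sub>C a" by (rule cscale_add_left)
  then show ?thesis by (simp add: eq_neg_iff_add_eq_0 add.commute)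
qed

lemma cstar_scaleR [simp]: "cstar (r *\<^sub>R a) = r *\<^sub>R cstar (a::'a::cstar_algebra)"
  by (metis cscale_of_real cstar_cscale complex_cnj_complex_of_real)

lemma cstar_sum: "cstar (sum f A) = sum (\<lambda>i. cstar (f i)) (A::'b set)" for f :: "'b \<Rightarrow> 'a::cstar_algebra"
  by (induction A rule: infinite_finite_induct) auto

lemma cstar_power [simp]: "cstar (a ^ n) = (cstar a) ^ n" for a :: "'a::cstar_algebra"
proof (induction n)
  case (Suc n)
  have "cstar (a ^ Suc n) = cstar (a * a ^ n)" by simp
  also have "\<dots> = cstar a ^ n * cstar a" by (simp add: Suc)
  also have "\<dots> = cstar a ^ Suc n" by (simp add: power_commutes)
  finally show ?case .
qed simp

lemma norm_cstar [simp]: "norm (cstar a) = norm (a::'a::cstar_algebra)"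
proof -
  have le: "norm b \<le> norm (cstar b)" for b :: 'a
  proof (cases "b = 0")
    case False
    have "norm b * norm b = norm (cstar b * b)" by (simp add: cstar_identity)
    also have "\<dots> \<le> norm (cstar b) * norm b" by (rule norm_mult_ineq)
    finally show ?thesis using False by simp
  qed simp
  show ?thesis using le[of a] le[of "cstar a"] by simp
qed

lemma bounded_linear_cstar: "bounded_linear (cstar :: 'a::cstar_algebra \<Rightarrow> 'a)"
  by (rule bounded_linear_intro[where K=1]) auto

lemma cstar_suminf: "summable f \<Longrightarrow> cstar (suminf f) = (\<Sum>n. cstar (f n::'a::cstar_algebra))"
  by (rule bounded_linear.suminf[OF bounded_linear_cstar])

lemma norm_cstar_mult_self: "norm (cstar a * a) = norm (a::'a::cstar_algebra) ^ 2"
  by (simp add: cstar_identity power2_eq_square)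

lemma norm_mult_cstar_self: "norm (a * cstar a) = norm (a::'a::cstar_algebra) ^ 2"
  using norm_cstar_mult_self[of "cstar a"] by simp

definition sa :: "'a::cstar_algebra \<Rightarrow> bool" where "sa a \<longleftrightarrow> cstar a = a"

lemma sa_norm_sq: "sa a \<Longrightarrow> norm (a * a) = norm (a::'a::cstar_algebra) ^ 2"
  using norm_cstar_mult_self[of a] by (simp add: sa_def)

lemma sa_0 [simp]: "sa 0" and sa_1 [simp]: "sa 1" by (simp_all add: sa_def)
lemma sa_add: "sa a \<Longrightarrow> sa b \<Longrightarrow> sa (a + b)" by (simp add: sa_def)
lemma sa_diff: "sa a \<Longrightarrow> sa b \<Longrightarrow> sa (a - b)" by (simp add: sa_def)
lemma sa_minus: "sa a \<Longrightarrow> sa (- a)" by (simp add: sa_def)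
lemma sa_scaleR: "sa a \<Longrightarrow> sa (r *\<^sub>R a)" by (simp add: sa_def)
lemma sa_cstar_mult: "sa (cstar a * a)" by (simp add: sa_def)
lemma sa_mult_cstar: "sa (a * cstar a)" by (simp add: sa_def)
lemma sa_mult_comm: "sa a \<Longrightarrow> sa b \<Longrightarrow> a * b = b * a \<Longrightarrow> sa (a * b)" by (simp add: sa_def)
lemma sa_power: "sa a \<Longrightarrow> sa (a ^ n)" by (simp add: sa_def)
lemma sa_sq: "sa a \<Longrightarrow> sa (a * a)" by (simp add: sa_def)

lemma sa_nilpotent3: assumes "sa q" "q * q * q = 0" shows "q = (0::'a::cstar_algebra)"
proof -
  have "(q * q) * (q * q) = 0" using assms(2) by (metis mult.assoc mult_zero_left)
  then have "norm (q * q) = 0" using sa_norm_sq[OF sa_sq[OF assms(1)]] by simp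
  then have "norm q ^ 2 = 0" using sa_norm_sq[OF assms(1)] by simp
  then show ?thesis by simp
qed

definition jj :: "'a::cstar_algebra" where "jj = \<i> *\<^sub>C 1"

lemma jj_mult_left: "jj * a = \<i> *\<^sub>C a"
  by (simp add: jj_def cscale_mult_left)
lemma jj_mult_right: "a * jj = \<i> *\<^sub>C a"
  by (simp add: jj_def cscale_mult_right)
lemma jj_comm: "jj * a = a * jj"
  by (simp add: jj_mult_left jj_mult_right)
lemma jj_jj: "jj * jj = (-1 :: 'a::cstar_algebra)"
proof -
  have "jj * jj = \<i> *\<^sub>C (\<i> *\<^sub>C (1::'a))" unfolding jj_mult_left[of jj] by (simp add: jj_def)
  also have "\<dots> = (- 1) *\<^sub>C 1" by (simp add: cscale_cscale)
  also have "\<dots> = -1" by (simp add: cscale_minus_left cscale_of_real[of 1, simplified])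
  finally show ?thesis .
qed
lemma cstar_jj: "cstar jj = - (jj::'a::cstar_algebra)"
  by (simp add: jj_def cstar_cscale cscale_minus_left)
lemma norm_jj [simp]: "norm (jj::'a::cstar_algebra) = 1"
  by (simp add: jj_def norm_cscale)
lemma cscale_decomp: "c *\<^sub>C a = Re c *\<^sub>R a + Im c *\<^sub>R (jj * (a::'a::cstar_algebra))"
proof -
  have c: "c = complex_of_real (Re c) + \<i> * complex_of_real (Im c)"
    by (simp add: complex_eq_iff)
  have "c *\<^sub>C a = complex_of_real (Re c) *\<^sub>C a + (\<i> * complex_of_real (Im c)) *\<^sub>C a"
    by (subst c) (rule cscale_add_left)
  also have "(\<i> * complex_of_real (Im c)) *\<^sub>C a = \<i> *\<^sub>C (Im c *\<^sub>R a)"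
    by (simp add: cscale_cscale[symmetric] cscale_of_real)
  also have "\<dots> = Im c *\<^sub>R (jj * a)"
    by (simp add: jj_mult_left[symmetric])
  finally show ?thesis by (simp add: cscale_of_real)
qed

lemma jj_scaleR_comm: "jj * (r *\<^sub>R a) = r *\<^sub>R (jj * a)" by simp



section \<open>Binomial square root series\<close>

definition beta :: "nat \<Rightarrow> real" where "beta n = ((1/2::real) gchoose n) * (-1) ^ n"

lemma beta_0 [simp]: "beta 0 = 1" by (simp add: beta_def)

lemma beta_Suc: "beta (Suc n) = beta n * ((real n - 1/2) / real (Suc n))"
proof -
  have "(1/2::real) * ((1/2) gchoose n) = real n * ((1/2) gchoose n) + real (Suc n) * ((1/2) gchoose (Suc n))"
    by (rule gbinomial_mult_1)
  then have "real (Suc n) * ((1/2::real) gchoose (Suc n)) = (1/2 - real n) * ((1/2) gchoose n)"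
    by (simp add: algebra_simps)
  then have g: "((1/2::real) gchoose (Suc n)) = (1/2 - real n) * ((1/2) gchoose n) / real (Suc n)"
    by (simp add: eq_divide_eq mult.commute del: of_nat_Suc)
  have "beta (Suc n) = - ((-1) ^ n * ((1/2::real) gchoose (Suc n)))" by (simp add: beta_def)
  also have "\<dots> = - ((-1) ^ n * ((1/2 - real n) * ((1/2) gchoose n) / real (Suc n)))" by (simp only: g)
  also have "\<dots> = ((1/2::real) gchoose n) * (-1) ^ n * ((real n - 1/2) / real (Suc n))"
    by (simp only: times_divide_eq_left times_divide_eq_right minus_divide_left) (simp add: algebra_simps)
  finally show ?thesis by (simp only: beta_def)
qed

lemma beta_nonpos: "n \<ge> 1 \<Longrightarrow> beta n \<le> 0"
proof (induction n rule: dec_induct)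
  case base
  then show ?case by (simp add: beta_def)
next
  case (step n)
  have "(real n - 1/2) / real (Suc n) \<ge> 0" using step(1) by simp
  then have "beta n * ((real n - 1/2) / real (Suc n)) \<le> 0" using step(3) by (rule mult_nonpos_nonneg[rotated])
  then show ?case by (simp only: beta_Suc)
qed

lemma beta_series: assumes "0 \<le> r" "r < 1" shows "(\<lambda>n. beta n * r ^ n) sums sqrt (1 - r)"
proof -
  have "\<bar>- r\<bar> < 1" using assms by simp
  from sqrt_series[OF this] show ?thesis
    by (simp add: beta_def power_minus' mult.assoc)
qed

lemma beta_tail_partial: "(\<Sum>n<N. \<bar>beta (Suc n)\<bar>) \<le> 1"
proof -
  define f where "f r = (\<Sum>n<N. \<bar>beta (Suc n)\<bar> * r ^ Suc n)" for r :: real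
  have le: "f r \<le> 1" if r: "0 \<le> r" "r < 1" for r
  proof -
    have s: "(\<lambda>n. beta (Suc n) * r ^ Suc n) sums (sqrt (1 - r) - 1)"
      using beta_series[OF r] by (subst sums_Suc_iff) simp
    then have s': "(\<lambda>n. - (beta (Suc n) * r ^ Suc n)) sums (1 - sqrt (1 - r))"
      using sums_minus by fastforce
    have nn: "0 \<le> - (beta (Suc n) * r ^ Suc n)" for n
      using beta_nonpos[of "Suc n"] r by (simp add: mult_nonpos_nonneg)
    have "f r = (\<Sum>n<N. - (beta (Suc n) * r ^ Suc n))"
      unfolding f_def using beta_nonpos[of "Suc _"] by (intro sum.cong) (auto simp: abs_of_nonpos)
    also have "\<dots> \<le> 1 - sqrt (1 - r)"
      using sum_le_suminf[OF sums_summable[OF s'] _ ] nn sums_unique[OF s'] by fastforce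
    also have "\<dots> \<le> 1" using r by simp
    finally show ?thesis .
  qed
  define r where "r k = 1 - inverse (real (Suc k))" for k
  have r1: "r \<longlonglongrightarrow> 1"
    unfolding r_def using tendsto_diff[OF tendsto_const LIMSEQ_inverse_real_of_nat] by simp
  have "(\<lambda>k. f (r k)) \<longlonglongrightarrow> f 1"
    unfolding f_def by (intro tendsto_intros r1)
  moreover have "f (r k) \<le> 1" for k
    by (rule le) (auto simp: r_def field_simps)
  ultimately have "f 1 \<le> 1" by (intro LIMSEQ_le_const2) auto
  then show ?thesis by (simp add: f_def)
qed

lemma beta_tail_summable: "summable (\<lambda>n. \<bar>beta (Suc n)\<bar>)"
  by (rule summableI_nonneg_bounded[OF _ beta_tail_partial]) simp

lemma beta_abs_summable: "summable (\<lambda>n. \<bar>beta n\<bar>)"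
  using beta_tail_summable by (subst summable_Suc_iff[symmetric])

lemma beta_tail_le: "(\<Sum>n. \<bar>beta (Suc n)\<bar>) \<le> 1"
  by (rule suminf_le_const[OF beta_tail_summable beta_tail_partial])

definition csq :: "'a::cstar_algebra \<Rightarrow> 'a" where
  "csq u = (\<Sum>n. beta n *\<^sub>R u ^ n)"

lemma csq_term_bound: assumes "norm (u::'a::cstar_algebra) \<le> 1"
  shows "norm (beta n *\<^sub>R u ^ n) \<le> \<bar>beta n\<bar>"
proof -
  have "norm (u ^ n) \<le> norm u ^ n" by (rule norm_power_ineq)
  also have "\<dots> \<le> 1" using assms by (simp add: power_le_one)
  finally show ?thesis by (simp add: mult_left_le)
qed

lemma csq_summable_norm: assumes "norm (u::'a::cstar_algebra) \<le> 1"
  shows "summable (\<lambda>n. norm (beta n *\<^sub>R u ^ n))"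
  by (rule summable_comparison_test[OF _ beta_abs_summable]) (use csq_term_bound[OF assms] in auto)

lemma csq_summable: assumes "norm (u::'a::cstar_algebra) \<le> 1"
  shows "summable (\<lambda>n. beta n *\<^sub>R u ^ n)"
  by (rule summable_norm_cancel[OF csq_summable_norm[OF assms]])

lemma gbinomial_one_real: "(1::real) gchoose k = (if k = 0 then 1 else if k = 1 then 1 else 0)"
proof -
  have "(1::real) gchoose k = of_nat (1 choose k)" using binomial_gbinomial[of 1 k, where 'a=real] by simp
  moreover have "(1::nat) choose k = (if k = 0 then 1 else if k = 1 then 1 else 0)"
    by (cases k) (auto simp: binomial_eq_0)
  ultimately show ?thesis by simp
qed

lemma beta_conv: "(\<Sum>i\<le>k. beta i * beta (k - i)) = (if k = 0 then 1 else if k = 1 then -1 else 0)"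
proof -
  have "(\<Sum>i\<le>k. beta i * beta (k - i)) = (\<Sum>i\<le>k. (-1)^k * (((1/2::real) gchoose i) * ((1/2) gchoose (k - i))))"
  proof (intro sum.cong refl)
    fix i assume "i \<in> {..k}"
    then have e: "(-1::real) ^ i * (-1) ^ (k - i) = (-1) ^ k" by (simp add: power_add[symmetric])
    have "beta i * beta (k - i) = (((1/2::real) gchoose i) * ((1/2) gchoose (k - i))) * ((-1::real) ^ i * (-1) ^ (k - i))"
      unfolding beta_def by (simp only: ac_simps)
    then show "beta i * beta (k - i) = (-1) ^ k * (((1/2::real) gchoose i) * ((1/2) gchoose (k - i)))"
      by (simp only: e mult.commute)
  qed
  also have "\<dots> = (-1)^k * (\<Sum>i\<le>k. ((1/2::real) gchoose i) * ((1/2) gchoose (k - i)))"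
    by (simp only: sum_distrib_left)
  also have "(\<Sum>i\<le>k. ((1/2::real) gchoose i) * ((1/2) gchoose (k - i))) = (1/2 + 1/2) gchoose k"
    using gbinomial_Vandermonde[of "1/2::real" "1/2" k] by (simp only: atMost_atLeast0)
  also have "(1/2 + 1/2 :: real) = 1" by simp
  finally show ?thesis by (simp add: gbinomial_one_real)
qed

lemma csq_sq: assumes "norm (u::'a::cstar_algebra) \<le> 1"
  shows "csq u * csq u = 1 - u"
proof -
  have cp: "(\<lambda>k. \<Sum>i\<le>k. (beta i *\<^sub>R u ^ i) * (beta (k - i) *\<^sub>R u ^ (k - i))) sums (csq u * csq u)"
    unfolding csq_def by (rule Cauchy_product_sums[OF csq_summable_norm[OF assms] csq_summable_norm[OF assms]])
  have eq: "(\<Sum>i\<le>k. (beta i *\<^sub>R u ^ i) * (beta (k - i) *\<^sub>R u ^ (k - i))) =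
        (if k = 0 then 1 else 0) + (if k = 1 then - u else 0)" for k
  proof -
    have "(\<Sum>i\<le>k. (beta i *\<^sub>R u ^ i) * (beta (k - i) *\<^sub>R u ^ (k - i))) =
          (\<Sum>i\<le>k. (beta i * beta (k - i)) *\<^sub>R u ^ k)"
    proof (intro sum.cong refl)
      fix i assume "i \<in> {..k}"
      then have "u ^ i * u ^ (k - i) = u ^ k" by (simp add: power_add[symmetric])
      then show "(beta i *\<^sub>R u ^ i) * (beta (k - i) *\<^sub>R u ^ (k - i)) = (beta i * beta (k - i)) *\<^sub>R u ^ k"
        by simp
    qed
    also have "\<dots> = (\<Sum>i\<le>k. beta i * beta (k - i)) *\<^sub>R u ^ k"
      by (simp add: scaleR_sum_left)
    finally show ?thesis by (simp add: beta_conv)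
  qed
  have "(\<lambda>k. (if k = 0 then 1 else 0) + (if k = 1 then - u else 0)) sums (1 + - u)"
    by (intro sums_add) (use sums_single[of 0 "\<lambda>_. (1::'a)"] sums_single[of 1 "\<lambda>_. - u"] in simp_all)
  then have "(\<lambda>k. \<Sum>i\<le>k. (beta i *\<^sub>R u ^ i) * (beta (k - i) *\<^sub>R u ^ (k - i))) sums (1 - u)"
    unfolding eq by simp
  then show ?thesis using cp sums_unique2 by blast
qed

lemma commute_power: "z * u = u * z \<Longrightarrow> z * u ^ n = u ^ n * (z::'a::monoid_mult)"
proof (induction n)
  case (Suc n)
  have "z * u ^ Suc n = (z * u) * u ^ n" by (simp add: mult.assoc)
  also have "\<dots> = u * (z * u ^ n)" using Suc by (simp add: mult.assoc)
  also have "\<dots> = u ^ Suc n * z" using Suc by (simp add: mult.assoc)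
  finally show ?case .
qed simp

lemma csq_comm: assumes "norm (u::'a::cstar_algebra) \<le> 1" "z * u = u * z"
  shows "z * csq u = csq u * z"
proof -
  have "z * csq u = (\<Sum>n. z * (beta n *\<^sub>R u ^ n))"
    unfolding csq_def by (rule suminf_mult[OF csq_summable[OF assms(1)], symmetric])
  also have "\<dots> = (\<Sum>n. (beta n *\<^sub>R u ^ n) * z)"
    using commute_power[OF assms(2)] by simp
  also have "\<dots> = csq u * z"
    unfolding csq_def by (rule suminf_mult2[OF csq_summable[OF assms(1)], symmetric])
  finally show ?thesis .
qed

lemma csq_sa: assumes "norm (u::'a::cstar_algebra) \<le> 1" "sa u" shows "sa (csq u)"
proof -
  have "cstar (csq u) = (\<Sum>n. cstar (beta n *\<^sub>R u ^ n))"
    unfolding csq_def by (rule cstar_suminf[OF csq_summable[OF assms(1)]])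
  also have "\<dots> = csq u" using assms(2) by (simp add: sa_def csq_def)
  finally show ?thesis by (simp add: sa_def)
qed

lemma csq_bound: assumes "norm (u::'a::cstar_algebra) \<le> 1" shows "norm (1 - csq u) \<le> 1"
proof -
  have s: "summable (\<lambda>n. beta n *\<^sub>R u ^ n)" by (rule csq_summable[OF assms])
  have sn: "summable (\<lambda>n. norm (beta (Suc n) *\<^sub>R u ^ Suc n))"
    using csq_summable_norm[OF assms] by (subst summable_Suc_iff)
  have "(\<Sum>n. beta (Suc n) *\<^sub>R u ^ Suc n) = csq u - 1"
    unfolding csq_def using suminf_split_head[OF s] by simp
  then have "1 - csq u = - (\<Sum>n. beta (Suc n) *\<^sub>R u ^ Suc n)" by simp
  then have "norm (1 - csq u) = norm (\<Sum>n. beta (Suc n) *\<^sub>R u ^ Suc n)" by simp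
  also have "\<dots> \<le> (\<Sum>n. norm (beta (Suc n) *\<^sub>R u ^ Suc n))" by (rule summable_norm[OF sn])
  also have "\<dots> \<le> (\<Sum>n. \<bar>beta (Suc n)\<bar>)"
    by (rule suminf_le[OF _ sn beta_tail_summable]) (rule csq_term_bound[OF assms])
  also have "\<dots> \<le> 1" by (rule beta_tail_le)
  finally show ?thesis .
qed



section \<open>Unitary trick\<close>

lemma unitary_trick: assumes "sa s" "sa t" "s * t = t * s"
  shows "norm s ^ 2 \<le> norm (s * s + t * t :: 'a::cstar_algebra)"
proof -
  define z where "z = s + jj * t"
  have cz: "cstar z = s - jj * t"
    using assms(1,2) by (simp add: z_def sa_def cstar_jj jj_comm)
  have 1: "s * (jj * t) = jj * (s * t)" by (metis jj_comm mult.assoc)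
  have 2: "(jj * t) * s = jj * (s * t)" using assms(3) by (simp add: mult.assoc)
  have 3: "(jj * t) * (jj * t) = - (t * t)"
  proof -
    have "(jj * t) * (jj * t) = jj * (t * jj) * t" by (simp add: mult.assoc)
    also have "\<dots> = (jj * jj) * (t * t)" by (simp add: jj_comm[of t, symmetric] mult.assoc)
    finally show ?thesis by (simp add: jj_jj)
  qed
  have "cstar z * z = (s - jj * t) * z" by (simp only: cz)
  also have "\<dots> = (s - jj * t) * (s + jj * t)" by (simp only: z_def)
  also have "\<dots> = s * s + s * (jj * t) - (jj * t) * s - (jj * t) * (jj * t)"
    by (simp add: algebra_simps)
  also have "\<dots> = s * s + t * t" by (simp add: 1 2 3)
  finally have zz: "cstar z * z = s * s + t * t" .
  have nz: "norm z ^ 2 = norm (s * s + t * t)"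
    using norm_cstar_mult_self[of z] zz by simp
  have "z + cstar z = 2 *\<^sub>R s" unfolding cz unfolding z_def by (simp add: scaleR_2)
  then have "s = (1/2) *\<^sub>R (z + cstar z)" by simp
  then have "norm s = norm ((1/2::real) *\<^sub>R (z + cstar z))" by (rule arg_cong)
  also have "\<dots> = (1/2) * norm (z + cstar z)" by simp
  also have "\<dots> \<le> (1/2) * (norm z + norm (cstar z))" by (intro mult_left_mono norm_triangle_ineq) auto
  finally have "norm s \<le> (1/2) * (norm z + norm (cstar z))" .
  then have "norm s \<le> norm z" by simp
  then have "norm s ^ 2 \<le> norm z ^ 2" by (simp add: power_mono)
  then show ?thesis using nz by simp
qed

definition isinv :: "'a::cstar_algebra \<Rightarrow> bool" where
  "isinv a \<longleftrightarrow> (\<exists>b. a * b = 1 \<and> b * a = 1)"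

lemma isinv_neumann: assumes "norm (u::'a::cstar_algebra) < 1" shows "isinv (1 - u)"
proof -
  have sn: "summable (\<lambda>n. norm u ^ n)" using assms by (simp add: summable_geometric)
  have s: "summable (\<lambda>n. u ^ n)"
    by (rule summable_comparison_test[OF _ sn]) (auto intro: norm_power_ineq)
  define S where "S = (\<Sum>n. u ^ n)"
  have h: "(\<Sum>n. u ^ Suc n) = S - 1" unfolding S_def using suminf_split_head[OF s] by simp
  have "u * S = (\<Sum>n. u * u ^ n)" unfolding S_def by (rule suminf_mult[OF s, symmetric])
  also have "\<dots> = S - 1" using h by simp
  finally have 1: "u * S = S - 1" .
  have "S * u = (\<Sum>n. u ^ n * u)" unfolding S_def by (rule suminf_mult2[OF s])
  also have "\<dots> = S - 1" using h by (simp add: power_commutes)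
  finally have 2: "S * u = S - 1" .
  have "(1 - u) * S = 1" using 1 by (simp add: algebra_simps)
  moreover have "S * (1 - u) = 1" using 2 by (simp add: algebra_simps)
  ultimately show ?thesis unfolding isinv_def by blast
qed

lemma isinv_mult: "isinv a \<Longrightarrow> isinv b \<Longrightarrow> isinv (a * b)"
proof -
  assume "isinv a" "isinv b"
  then obtain a' b' where "a * a' = 1" "a' * a = 1" "b * b' = 1" "b' * b = 1" unfolding isinv_def by blast
  then have "(a * b) * (b' * a') = 1" "(b' * a') * (a * b) = 1"
    by (simp_all add: mult.assoc) (metis mult.assoc mult_1_left)+
  then show ?thesis unfolding isinv_def by blast
qed

lemma isinv_comm_factor: assumes "isinv (a * b)" "a * b = b * a" shows "isinv a"
proof -
  obtain g where g: "(a * b) * g = 1" "g * (a * b) = 1" using assms(1) unfolding isinv_def by blast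
  have "a * (b * g) = 1" using g(1) by (simp add: mult.assoc)
  moreover have "(g * b) * a = 1" using g(2) assms(2) by (simp add: mult.assoc)
  ultimately have "a * (b * g) = 1" "(g * b) * a = 1" .
  then have "b * g = g * b"
    by (metis mult.assoc mult_1_left mult_1_right)
  then show ?thesis unfolding isinv_def using \<open>a * (b * g) = 1\<close> \<open>(g * b) * a = 1\<close> by metis
qed

lemma isinv_scaleR: "isinv a \<Longrightarrow> c \<noteq> 0 \<Longrightarrow> isinv (c *\<^sub>R a)"
  unfolding isinv_def by (metis (no_types, lifting) mult_scaleR_left mult_scaleR_right
      right_inverse scaleR_one scaleR_scaleR)

lemma isinv_scaleR_iff: "c \<noteq> 0 \<Longrightarrow> isinv (c *\<^sub>R a) \<longleftrightarrow> isinv a"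
  using isinv_scaleR[of a c] isinv_scaleR[of "c *\<^sub>R a" "inverse c"] by auto

lemma isinv_jacobson: assumes "isinv (1 - x * y)" shows "isinv (1 - y * (x::'a::cstar_algebra))"
proof -
  obtain g where g: "(1 - x * y) * g = 1" "g * (1 - x * y) = 1" using assms unfolding isinv_def by blast
  have g1: "g - x * y * g = 1" using g(1) by (simp add: algebra_simps)
  have g2: "g - g * x * y = 1" using g(2) by (simp add: algebra_simps mult.assoc)
  have "(1 - y * x) * (1 + y * g * x) = 1 - y * x + y * (g - x * y * g) * x"
    by (simp add: algebra_simps mult.assoc)
  also have "\<dots> = 1" using g1 by (simp add: mult.assoc)
  finally have 1: "(1 - y * x) * (1 + y * g * x) = 1" .
  have "(1 + y * g * x) * (1 - y * x) = 1 - y * x + y * (g - g * x * y) * x"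
    by (simp add: algebra_simps mult.assoc)
  also have "\<dots> = 1" using g2 by (simp add: mult.assoc)
  finally have 2: "(1 + y * g * x) * (1 - y * x) = 1" .
  show ?thesis unfolding isinv_def using 1 2 by blast
qed

lemma inv_comm: assumes "a * b = 1" "b * a = 1" "z * a = a * z" shows "z * b = b * (z::'a::cstar_algebra)"
proof -
  have "z * b = b * a * z * b" by (simp add: assms(2))
  also have "\<dots> = b * z * a * b" using assms(3) by (simp add: mult.assoc)
  also have "\<dots> = b * z" using assms(1) by (simp add: mult.assoc)
  finally show ?thesis .
qed

lemma inv_sa: assumes "sa a" "a * b = 1" "b * a = 1" shows "sa (b::'a::cstar_algebra)"
proof -
  have "cstar b * a = 1" using assms(1,2) cstar_mult[of a b] by (simp add: sa_def)
  then have "cstar b = b" by (metis assms(2) mult.assoc mult_1_left mult_1_right)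
  then show ?thesis by (simp add: sa_def)
qed

section \<open>Positivity\<close>

definition pos :: "'a::cstar_algebra \<Rightarrow> bool" where
  "pos a \<longleftrightarrow> sa a \<and> (\<exists>t\<ge>0. norm (t *\<^sub>R 1 - a) \<le> t)"

lemma pos_sa: "pos a \<Longrightarrow> sa a" by (simp add: pos_def)

lemma pos_0 [simp]: "pos 0" unfolding pos_def by (auto intro: exI[of _ 0])

lemma pos_add: assumes "pos a" "pos b" shows "pos (a + b)"
proof -
  obtain s t where st: "s \<ge> 0" "norm (s *\<^sub>R 1 - a) \<le> s" "t \<ge> 0" "norm (t *\<^sub>R 1 - b) \<le> t"
    using assms unfolding pos_def by blast
  have "norm ((s + t) *\<^sub>R 1 - (a + b)) = norm ((s *\<^sub>R 1 - a) + (t *\<^sub>R 1 - b))"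
    by (simp add: algebra_simps)
  also have "\<dots> \<le> s + t" using st by (meson add_mono norm_triangle_le)
  finally show ?thesis using assms st unfolding pos_def by (auto intro!: sa_add exI[of _ "s + t"])
qed

lemma pos_scaleR: assumes "pos a" "c \<ge> 0" shows "pos (c *\<^sub>R a)"
proof -
  obtain s where s: "s \<ge> 0" "norm (s *\<^sub>R 1 - a) \<le> s" using assms unfolding pos_def by blast
  have "(c * s) *\<^sub>R 1 - c *\<^sub>R a = c *\<^sub>R (s *\<^sub>R 1 - a)" by (simp add: algebra_simps)
  then have "norm ((c * s) *\<^sub>R 1 - c *\<^sub>R a) = c * norm (s *\<^sub>R 1 - a)"
    using assms(2) by simp
  also have "\<dots> \<le> c * s" using s assms(2) by (simp add: mult_left_mono)
  finally show ?thesis using assms s unfolding pos_def by (auto intro!: sa_scaleR exI[of _ "c * s"])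
qed

lemma pos_sqrt: assumes "pos h"
  shows "\<exists>s. sa s \<and> s * s = h \<and> pos s \<and> (\<forall>z. z * h = h * z \<longrightarrow> z * s = s * z)"
proof -
  obtain t where t: "t \<ge> 0" "norm (t *\<^sub>R 1 - h) \<le> t" using assms unfolding pos_def by blast
  show ?thesis
  proof (cases "t = 0")
    case True
    then have "h = 0" using t by simp
    then show ?thesis by (intro exI[of _ 0]) simp
  next
    case False
    then have tp: "t > 0" using t by simp
    define u where "u = (1/t) *\<^sub>R (t *\<^sub>R 1 - h)"
    have nu: "norm u \<le> 1" using t tp by (simp add: u_def divide_le_eq_1)
    have sau: "sa u" using pos_sa[OF assms] by (simp add: u_def sa_def)
    define s0 where "s0 = csq u"
    have s0: "s0 * s0 = 1 - u" unfolding s0_def by (rule csq_sq[OF nu])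
    have sas0: "sa s0" unfolding s0_def by (rule csq_sa[OF nu sau])
    have b0: "norm (1 - s0) \<le> 1" unfolding s0_def by (rule csq_bound[OF nu])
    define s where "s = sqrt t *\<^sub>R s0"
    have "s * s = t *\<^sub>R (s0 * s0)" using t by (simp add: s_def)
    also have "\<dots> = h" using tp by (simp add: s0 u_def algebra_simps)
    finally have ss: "s * s = h" .
    have "sqrt t *\<^sub>R 1 - s = sqrt t *\<^sub>R (1 - s0)" by (simp add: s_def algebra_simps)
    then have "norm (sqrt t *\<^sub>R 1 - s) = sqrt t * norm (1 - s0)" using t(1) by simp
    also have "\<dots> \<le> sqrt t" by (rule mult_left_le[OF b0]) (use t(1) in simp)
    finally have ps: "pos s" using sas0 t(1) unfolding pos_def s_def by (auto intro!: sa_scaleR exI[of _ "sqrt t"])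
    have "z * s = s * z" if "z * h = h * z" for z
    proof -
      have "z * u = u * z" using that by (simp add: u_def algebra_simps)
      then have "z * s0 = s0 * z" unfolding s0_def by (rule csq_comm[OF nu])
      then show ?thesis by (simp add: s_def)
    qed
    then show ?thesis using sas0 ss ps by (intro exI[of _ s]) (auto simp: s_def intro: sa_scaleR)
  qed
qed

lemma pos_square_strong: assumes "sa s"
  shows "norm (norm (s * s) *\<^sub>R 1 - s * s) \<le> norm (s * (s::'a::cstar_algebra))"
proof (cases "s = 0")
  case False
  define r where "r = norm s"
  have rp: "r > 0" using False by (simp add: r_def)
  define s1 where "s1 = (1/r) *\<^sub>R s"
  have sa1: "sa s1" using assms by (simp add: s1_def sa_scaleR)
  have n1: "norm s1 = 1" using rp by (simp add: s1_def r_def)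
  have n11: "norm (s1 * s1) = 1" using sa_norm_sq[OF sa1] n1 by simp
  define w where "w = csq (s1 * s1)"
  have nu: "norm (s1 * s1) \<le> 1" using n11 by simp
  have ww: "w * w = 1 - s1 * s1" unfolding w_def by (rule csq_sq[OF nu])
  have saw: "sa w" unfolding w_def by (rule csq_sa[OF nu sa_sq[OF sa1]])
  have cw: "s1 * w = w * s1" unfolding w_def by (rule csq_comm[OF nu]) (simp add: mult.assoc)
  have "norm w ^ 2 \<le> norm (w * w + s1 * s1)" by (rule unitary_trick[OF saw sa1 cw[symmetric]])
  also have "\<dots> = 1" using ww by simp
  finally have "norm w ^ 2 \<le> 1" .
  then have b: "norm (1 - s1 * s1) \<le> 1" using sa_norm_sq[OF saw] ww by simp
  have ss: "s * s = (r * r) *\<^sub>R (s1 * s1)" using rp by (simp add: s1_def)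
  have "norm (s * s) = \<bar>r * r\<bar> * norm (s1 * s1)" by (simp only: ss norm_scaleR)
  also have "\<dots> = \<bar>r * r\<bar>" by (simp only: n11 mult_1_right)
  also have "\<dots> = r * r" using rp by simp
  finally have nss: "norm (s * s) = r * r" .
  have e: "norm (s * s) *\<^sub>R 1 - s * s = (r * r) *\<^sub>R (1 - s1 * s1)"
    unfolding nss unfolding ss by (simp only: scaleR_diff_right scaleR_one)
  have "norm (norm (s * s) *\<^sub>R 1 - s * s) = (r * r) * norm (1 - s1 * s1)"
    unfolding e norm_scaleR using rp by simp
  also have "\<dots> \<le> r * r" by (rule mult_left_le[OF b]) simp
  finally show ?thesis using nss by simp
qed simp

lemma pos_square: "sa s \<Longrightarrow> pos (s * s)"
  unfolding pos_def using pos_square_strong[of s] by (auto intro!: sa_sq exI[of _ "norm (s * s)"])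

lemma pos_mult_comm: assumes "pos a" "pos b" "a * b = b * a" shows "pos (a * b)"
proof -
  obtain s where s: "sa s" "s * s = a" "\<forall>z. z * a = a * z \<longrightarrow> z * s = s * z"
    using pos_sqrt[OF assms(1)] by blast
  obtain t where t: "sa t" "t * t = b" "\<forall>z. z * b = b * z \<longrightarrow> z * t = t * z"
    using pos_sqrt[OF assms(2)] by blast
  have "b * s = s * b" using s(3) assms(3) by metis
  then have st: "s * t = t * s" using t(3) by metis
  have "a * b = (s * t) * (s * t)"
    by (metis mult.assoc s(2) st t(2))
  then show ?thesis using pos_square[OF sa_mult_comm[OF s(1) t(1) st]] by simp
qed

lemma pos_antisym: assumes "pos a" "pos (- a)" shows "a = (0::'a::cstar_algebra)"
proof -
  obtain s where s: "sa s" "s * s = a" "\<forall>z. z * a = a * z \<longrightarrow> z * s = s * z"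
    using pos_sqrt[OF assms(1)] by blast
  obtain t where t: "sa t" "t * t = - a" "\<forall>z. z * (- a) = (- a) * z \<longrightarrow> z * t = t * z"
    using pos_sqrt[OF assms(2)] by blast
  have "s * a = a * s" using s(2) by (metis mult.assoc)
  then have "s * (- a) = (- a) * s" by simp
  then have st: "s * t = t * s" using t(3) by metis
  have "norm s ^ 2 \<le> norm (s * s + t * t)" by (rule unitary_trick[OF s(1) t(1) st])
  also have "\<dots> = 0" using s(2) t(2) by simp
  finally have "s = 0" by simp
  then show ?thesis using s(2) by simp
qed

lemma pos_mono_norm: assumes "pos a" "pos (l *\<^sub>R 1 - a)" shows "norm a \<le> \<bar>l\<bar>"
proof -
  obtain s where s: "sa s" "s * s = a" "\<forall>z. z * a = a * z \<longrightarrow> z * s = s * z"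
    using pos_sqrt[OF assms(1)] by blast
  obtain t where t: "sa t" "t * t = l *\<^sub>R 1 - a" "\<forall>z. z * (l *\<^sub>R 1 - a) = (l *\<^sub>R 1 - a) * z \<longrightarrow> z * t = t * z"
    using pos_sqrt[OF assms(2)] by blast
  have "s * a = a * s" using s(2) by (metis mult.assoc)
  then have "s * (l *\<^sub>R 1 - a) = (l *\<^sub>R 1 - a) * s" by (simp add: algebra_simps)
  then have st: "s * t = t * s" using t(3) by metis
  have "norm s ^ 2 \<le> norm (s * s + t * t)" by (rule unitary_trick[OF s(1) t(1) st])
  also have "\<dots> = \<bar>l\<bar>" using s(2) t(2) by simp
  finally show ?thesis using sa_norm_sq[OF s(1)] s(2) by simp
qed

lemma pos_isinv: assumes "pos h" "e > 0" shows "isinv (h + e *\<^sub>R 1)"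
proof -
  obtain t where t: "t \<ge> 0" "norm (t *\<^sub>R 1 - h) \<le> t" using assms unfolding pos_def by blast
  define u where "u = (1 / (t + e)) *\<^sub>R (t *\<^sub>R 1 - h)"
  have "norm u = norm (t *\<^sub>R 1 - h) / (t + e)" using t assms(2) by (simp add: u_def)
  also have "\<dots> < 1" using t assms(2) by (simp add: divide_less_eq)
  finally have "isinv (1 - u)" by (rule isinv_neumann)
  then have "isinv ((t + e) *\<^sub>R (1 - u))" using t assms(2) by (intro isinv_scaleR) auto
  moreover have "(t + e) *\<^sub>R (1 - u) = (t + e) *\<^sub>R 1 - (t *\<^sub>R 1 - h)"
    using t assms(2) by (simp add: u_def scaleR_diff_right)
  moreover have "(t + e) *\<^sub>R 1 - (t *\<^sub>R 1 - h) = h + e *\<^sub>R 1" by (simp add: algebra_simps)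
  ultimately show ?thesis by simp
qed

lemma norm_one_not_isinv: assumes "sa k" "norm k = 1"
  shows "\<not> isinv (1 - k * (k::'a::cstar_algebra))"
proof
  assume inv: "isinv (1 - k * k)"
  define c where "c = 1 - k * k"
  obtain g where g: "c * g = 1" "g * c = 1" using inv unfolding isinv_def c_def by blast
  have nkk: "norm (k * k) = 1" using sa_norm_sq[OF assms(1)] assms(2) by simp
  then have nu: "norm (k * k) \<le> 1" by simp
  define w where "w = csq (k * k)"
  have ww: "w * w = c" unfolding w_def c_def by (rule csq_sq[OF nu])
  have saw: "sa w" unfolding w_def by (rule csq_sa[OF nu sa_sq[OF assms(1)]])
  have posc: "pos c" using pos_square[OF saw] ww by simp
  define M where "M = norm g + 1"
  have M1: "M \<ge> 1" by (simp add: M_def)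
  have pM: "pos (M *\<^sub>R 1 - g)"
  proof -
    have "sa g" using inv_sa[OF _ g] assms(1) by (simp add: c_def sa_def)
    moreover have "norm (M *\<^sub>R 1 - (M *\<^sub>R 1 - g)) \<le> M" by (simp add: M_def)
    ultimately show ?thesis unfolding pos_def using M1 by (auto intro!: exI[of _ M] sa_diff sa_scaleR)
  qed
  have comm: "(M *\<^sub>R 1 - g) * c = c * (M *\<^sub>R 1 - g)" using g by (simp add: algebra_simps)
  have "pos ((M *\<^sub>R 1 - g) * c)" by (rule pos_mult_comm[OF pM posc comm])
  then have "pos ((1/M) *\<^sub>R ((M *\<^sub>R 1 - g) * c))" by (rule pos_scaleR) (use M1 in simp)
  moreover have "(1/M) *\<^sub>R ((M *\<^sub>R 1 - g) * c) = (1 - 1/M) *\<^sub>R 1 - k * k"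
  proof -
    have e1: "(M *\<^sub>R 1 - g) * c = M *\<^sub>R c - 1" using g(2) by (simp add: algebra_simps)
    have "(1/M) *\<^sub>R (M *\<^sub>R c - 1) = c - (1/M) *\<^sub>R 1" using M1 by (simp add: scaleR_diff_right)
    also have "\<dots> = (1 - 1/M) *\<^sub>R 1 - k * k" by (simp add: c_def scaleR_diff_left)
    finally show ?thesis using e1 by simp
  qed
  ultimately have p2: "pos ((1 - 1/M) *\<^sub>R 1 - k * k)" by simp
  have "norm (k * k) \<le> \<bar>1 - 1/M\<bar>" by (rule pos_mono_norm[OF pos_square[OF assms(1)] p2])
  also have "\<dots> < 1" using M1 by auto
  finally show False using nkk by simp
qed

lemma isinv_imp_pos: assumes "sa h" "\<And>e. e > 0 \<Longrightarrow> isinv (h + e *\<^sub>R 1)"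
  shows "norm (norm h *\<^sub>R 1 - h) \<le> norm (h::'a::cstar_algebra)"
proof (rule ccontr)
  define n where "n = norm h"
  define k where "k = n *\<^sub>R 1 - h"
  define r where "r = norm k"
  assume "\<not> ?thesis"
  then have rn: "r > n" by (simp add: r_def k_def n_def)
  have n0: "n \<ge> 0" by (simp add: n_def)
  have sak: "sa k" using assms(1) by (simp add: k_def sa_def)
  define k1 where "k1 = (1/r) *\<^sub>R k"
  have sak1: "sa k1" using sak by (simp add: k1_def sa_scaleR)
  have "k \<noteq> 0" using rn n0 by (auto simp: r_def)
  then have nk1: "norm k1 = 1" by (simp add: k1_def r_def)
  have i1: "isinv (h + (r - n) *\<^sub>R 1)" using assms(2) rn by simp
  have "norm ((1 / (r + n)) *\<^sub>R h) < 1" using rn n0 by (simp add: n_def[symmetric] divide_less_eq)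
  then have "isinv (1 - (1 / (r + n)) *\<^sub>R h)" by (rule isinv_neumann)
  then have i2: "isinv ((r + n) *\<^sub>R (1 - (1 / (r + n)) *\<^sub>R h))" using rn n0 by (intro isinv_scaleR) auto
  have "(r + n) *\<^sub>R (1 - (1 / (r + n)) *\<^sub>R h) = (r + n) *\<^sub>R 1 - h" using rn n0 by (simp add: algebra_simps)
  with i2 have i2': "isinv ((r + n) *\<^sub>R 1 - h)" by simp
  have "isinv ((h + (r - n) *\<^sub>R 1) * ((r + n) *\<^sub>R 1 - h))" by (rule isinv_mult[OF i1 i2'])
  then have "isinv ((1/(r*r)) *\<^sub>R ((h + (r - n) *\<^sub>R 1) * ((r + n) *\<^sub>R 1 - h)))" using rn n0 by (intro isinv_scaleR) auto
  moreover have "(1/(r*r)) *\<^sub>R ((h + (r - n) *\<^sub>R 1) * ((r + n) *\<^sub>R 1 - h)) = 1 - k1 * k1"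
  proof -
    have "(h + (r - n) *\<^sub>R 1) * ((r + n) *\<^sub>R 1 - h) = (r * r) *\<^sub>R 1 - k * k"
      by (simp add: k_def algebra_simps)
    moreover have "(1/(r*r)) *\<^sub>R ((r * r) *\<^sub>R 1 - k * k) = 1 - k1 * k1"
      using rn n0 by (simp add: k1_def scaleR_diff_right)
    ultimately show ?thesis by simp
  qed
  ultimately show False using norm_one_not_isinv[OF sak1 nk1] by simp
qed

lemma pos_strong: assumes "pos h" shows "norm (norm h *\<^sub>R 1 - h) \<le> norm h"
  by (rule isinv_imp_pos[OF pos_sa[OF assms] pos_isinv[OF assms]])

lemma pos_le: assumes "pos h" "t \<ge> norm h" shows "norm (t *\<^sub>R 1 - h) \<le> t"
proof -
  have "norm (t *\<^sub>R 1 - h) = norm ((t - norm h) *\<^sub>R 1 + (norm h *\<^sub>R 1 - h))" by (simp add: algebra_simps)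
  also have "\<dots> \<le> (t - norm h) + norm h"
    using pos_strong[OF assms(1)] assms(2) by (intro norm_triangle_le add_mono) auto
  finally show ?thesis by simp
qed

lemma isinv_pos: assumes "sa h" "\<And>e. e > 0 \<Longrightarrow> isinv (h + e *\<^sub>R 1)" shows "pos h"
  unfolding pos_def using assms isinv_imp_pos[OF assms] by (auto intro!: exI[of _ "norm h"])



lemma pos_one [simp]: "pos (1::'a::cstar_algebra)"
  using pos_square[of "1::'a"] by simp

lemma pos_cstar_mult: "pos (cstar x * (x::'a::cstar_algebra))"
proof -
  define a where "a = cstar x * x"
  have saa: "sa a" by (simp add: a_def sa_cstar_mult)
  obtain m where m: "sa m" "m * m = a * a" "pos m" "\<forall>z. z * (a * a) = (a * a) * z \<longrightarrow> z * m = m * z"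
    using pos_sqrt[OF pos_square[OF saa]] by blast
  have am: "a * m = m * a" using m(4) by (simp add: mult.assoc)
  define p where "p = (1/2::real) *\<^sub>R (m + a)"
  define q where "q = (1/2::real) *\<^sub>R (m - a)"
  have saq: "sa q" using m(1) saa by (simp add: q_def sa_def)
  have mm: "(m + a) * (m - a) = 0" "(m - a) * (m + a) = 0"
    using m(2) am by (simp_all add: algebra_simps)
  have pq: "p * q = 0" "q * p = 0" using mm by (simp_all add: p_def q_def)
  have apq: "a = p - q" by (simp add: p_def q_def algebra_simps scaleR_2[symmetric] scaleR_add_left[symmetric])
  have mpq: "m = p + q" by (simp add: p_def q_def algebra_simps scaleR_add_left[symmetric])
  have posq: "pos q"
  proof (rule isinv_pos[OF saq])
    fix e :: real assume e: "e > 0"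
    define X where "X = m + (2 * e) *\<^sub>R 1"
    have Xa: "X * a = a * X" using am by (simp add: X_def algebra_simps)
    have "(X - a) * (X + a) = X * X - a * a" using Xa by (simp add: algebra_simps)
    also have "\<dots> = (4 * e) *\<^sub>R (m + e *\<^sub>R 1)"
    proof -
      have h: "(e * 2) *\<^sub>R m + (e * 2) *\<^sub>R m = (e * 4) *\<^sub>R m"
        by (simp only: scaleR_add_left[symmetric]) simp
      show ?thesis using m(2) by (simp add: X_def algebra_simps h)
    qed
    finally have eq: "(X - a) * (X + a) = (4 * e) *\<^sub>R (m + e *\<^sub>R 1)" .
    have "isinv ((4 * e) *\<^sub>R (m + e *\<^sub>R 1))" using pos_isinv[OF m(3) e] e by (intro isinv_scaleR) auto
    then have i: "isinv ((X - a) * (X + a))" using eq by simp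
    have "(X - a) * (X + a) = (X + a) * (X - a)" using Xa by (simp add: algebra_simps)
    then have "isinv (X - a)" by (rule isinv_comm_factor[OF i])
    then have "isinv ((1/2::real) *\<^sub>R (X - a))" by (rule isinv_scaleR) simp
    moreover have "(1/2::real) *\<^sub>R (X - a) = q + e *\<^sub>R 1"
      by (simp add: X_def q_def algebra_simps)
    ultimately show "isinv (q + e *\<^sub>R 1)" by simp
  qed
  have posq3: "pos (q * (q * q))"
    by (rule pos_mult_comm[OF posq pos_square[OF saq]]) (simp add: mult.assoc)
  define y where "y = x * q"
  have "cstar y * y = q * a * q" using saq by (simp add: y_def a_def sa_def mult.assoc)
  also have "\<dots> = q * p * q - q * q * q" by (simp add: apq algebra_simps)
  also have "\<dots> = - (q * (q * q))" using pq by (simp add: mult.assoc)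
  finally have yy: "cstar y * y = - (q * (q * q))" .
  have pneg: "pos (- (cstar y * y))" using yy posq3 by simp
  define b where "b = y + cstar y"
  define d where "d = jj * (y - cstar y)"
  have sab: "sa b" by (simp add: b_def sa_def add.commute)
  have sad: "sa d"
  proof -
    have "cstar d = (cstar y - y) * (- jj)" by (simp add: d_def cstar_jj)
    also have "\<dots> = d" by (simp add: d_def jj_comm algebra_simps)
    finally show ?thesis by (simp add: sa_def)
  qed
  have dd: "d * d = - ((y - cstar y) * (y - cstar y))"
  proof -
    define w where "w = y - cstar y"
    have "d * d = jj * (w * jj) * w" by (simp add: d_def w_def mult.assoc)
    also have "\<dots> = (jj * jj) * (w * w)" by (simp add: jj_comm[of w, symmetric] mult.assoc)
    finally have "d * d = (jj * jj) * ((y - cstar y) * (y - cstar y))" by (simp add: w_def)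
    then show ?thesis by (simp add: jj_jj)
  qed
  have "b * b + d * d = 2 *\<^sub>R (y * cstar y + cstar y * y)"
    by (simp add: dd b_def algebra_simps scaleR_2)
  then have "y * cstar y = (1/2::real) *\<^sub>R (b * b + d * d) + (- (cstar y * y))" by simp
  moreover have "pos ((1/2::real) *\<^sub>R (b * b + d * d))"
    by (intro pos_scaleR pos_add pos_square sab sad) simp
  ultimately have pyy: "pos (y * cstar y)" using pneg pos_add by metis
  have "pos (cstar y * y)"
  proof (rule isinv_pos[OF sa_cstar_mult])
    fix e :: real assume e: "e > 0"
    have i1: "isinv (y * cstar y + e *\<^sub>R 1)" by (rule pos_isinv[OF pyy e])
    have "y * cstar y + e *\<^sub>R 1 = e *\<^sub>R (1 - ((-1/e) *\<^sub>R y) * cstar y)" using e by (simp add: algebra_simps)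
    then have "isinv (e *\<^sub>R (1 - ((-1/e) *\<^sub>R y) * cstar y))" using i1 by simp
    then have "isinv (1 - ((-1/e) *\<^sub>R y) * cstar y)" using isinv_scaleR_iff[of e] e by blast
    then have "isinv (1 - cstar y * ((-1/e) *\<^sub>R y))" by (rule isinv_jacobson)
    then have "isinv (e *\<^sub>R (1 - cstar y * ((-1/e) *\<^sub>R y)))" using e by (intro isinv_scaleR) auto
    moreover have "e *\<^sub>R (1 - cstar y * ((-1/e) *\<^sub>R y)) = cstar y * y + e *\<^sub>R 1" using e by (simp add: algebra_simps)
    ultimately show "isinv (cstar y * y + e *\<^sub>R 1)" by simp
  qed
  then have "cstar y * y = 0" using pos_antisym pneg by blast
  then have "q * q * q = 0" using yy by (simp add: mult.assoc)
  then have "q = 0" by (rule sa_nilpotent3[OF saq])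
  then have "a = m" using apq mpq by simp
  then show ?thesis using m(3) by (simp add: a_def)
qed

lemma positive_el_iff_pos: "positive_el a \<longleftrightarrow> pos (a::'a::cstar_algebra)"
proof
  assume "positive_el a"
  then show "pos a" unfolding positive_el_def using pos_cstar_mult by auto
next
  assume "pos a"
  then obtain s where "sa s" "s * s = a" using pos_sqrt by blast
  then show "positive_el a" unfolding positive_el_def sa_def by metis
qed

lemma cstar_sum_zero: assumes "cstar x * x + cstar y * y = 0" shows "x = (0::'a::cstar_algebra)"
proof -
  have "- (cstar x * x) = cstar y * y" using assms by (simp add: neg_eq_iff_add_eq_0)
  then have "pos (- (cstar x * x))" using pos_cstar_mult by metis
  then have "cstar x * x = 0" using pos_antisym pos_cstar_mult by blast
  then have "norm x ^ 2 = 0" using norm_cstar_mult_self[of x] by simp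
  then show ?thesis by simp
qed

lemma pos_bound_sub: assumes "sa h" "norm h \<le> l" shows "pos (l *\<^sub>R 1 - h)"
  unfolding pos_def using assms by (auto intro!: exI[of _ l] sa_diff sa_scaleR dest: order_trans[OF norm_ge_zero])

lemma pos_bound_add: assumes "sa h" "norm h \<le> l" shows "pos (l *\<^sub>R 1 + h)"
  using pos_bound_sub[of "- h" l] assms by (simp add: sa_minus)

lemma pos_two_sided_bound: assumes "sa k" "l \<ge> 0" "pos (l *\<^sub>R 1 - k)" "pos (l *\<^sub>R 1 + k)"
  shows "norm k \<le> l"
proof -
  have c: "(l *\<^sub>R 1 - k) * (l *\<^sub>R 1 + k) = (l *\<^sub>R 1 + k) * (l *\<^sub>R 1 - k)" by (simp add: algebra_simps)
  have "pos ((l *\<^sub>R 1 - k) * (l *\<^sub>R 1 + k))" by (rule pos_mult_comm[OF assms(3,4) c])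
  moreover have "(l *\<^sub>R 1 - k) * (l *\<^sub>R 1 + k) = (l * l) *\<^sub>R 1 - k * k" by (simp add: algebra_simps)
  ultimately have "pos ((l * l) *\<^sub>R 1 - k * k)" by simp
  then have "norm (k * k) \<le> \<bar>l * l\<bar>" by (rule pos_mono_norm[OF pos_square[OF assms(1)]])
  then have "norm k ^ 2 \<le> l ^ 2" using sa_norm_sq[OF assms(1)] by (simp add: power2_eq_square)
  then show ?thesis using assms(2) by (simp add: power2_le_iff_abs_le)
qed



lemma se_add: "star_endo f \<Longrightarrow> f (a + b) = f a + f b" by (simp add: star_endo_def clinear_map_def)
lemma se_mult: "star_endo f \<Longrightarrow> f (a * b) = f a * f b" by (simp add: star_endo_def)
lemma se_cstar: "star_endo f \<Longrightarrow> f (cstar a) = cstar (f a)" by (simp add: star_endo_def)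
lemma se_cscale: "star_endo f \<Longrightarrow> f (c *\<^sub>C a) = c *\<^sub>C f a" by (simp add: star_endo_def clinear_map_def)

lemma cl_add: "clinear_map f \<Longrightarrow> f (a + b) = f a + f b" by (simp add: clinear_map_def)
lemma cl_cscale: "clinear_map f \<Longrightarrow> f (c *\<^sub>C a) = c *\<^sub>C f a" by (simp add: clinear_map_def)
lemma cl_zero: "clinear_map f \<Longrightarrow> f 0 = 0"
  using cl_add[of f 0 0] by simp
lemma cl_minus: "clinear_map f \<Longrightarrow> f (- a) = - f a"
  using cl_add[of f a "- a"] cl_zero[of f] by (simp add: neg_eq_iff_add_eq_0[symmetric] add_eq_0_iff2)
lemma cl_diff: "clinear_map f \<Longrightarrow> f (a - b) = f a - f b"
  using cl_add[of f a "- b"] cl_minus[of f b] by simp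
lemma cl_scaleR: "clinear_map f \<Longrightarrow> f (r *\<^sub>R a) = r *\<^sub>R f a"
  using cl_cscale[of f "complex_of_real r" a] by (simp add: cscale_of_real)
lemma cl_jj: "clinear_map f \<Longrightarrow> f (jj * a) = jj * f a"
  using cl_cscale[of f "\<i>" a] by (simp add: jj_mult_left)
lemma se_clinear: "star_endo f \<Longrightarrow> clinear_map f" by (simp add: star_endo_def)
lemma se_zero: "star_endo f \<Longrightarrow> f 0 = 0" by (rule cl_zero[OF se_clinear])
lemma se_diff: "star_endo f \<Longrightarrow> f (a - b) = f a - f b" by (rule cl_diff[OF se_clinear])
lemma se_minus: "star_endo f \<Longrightarrow> f (- a) = - f a" by (rule cl_minus[OF se_clinear])
lemma se_scaleR: "star_endo f \<Longrightarrow> f (r *\<^sub>R a) = r *\<^sub>R f a" by (rule cl_scaleR[OF se_clinear])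

lemma se_one_idem: "star_endo f \<Longrightarrow> f 1 * f 1 = f 1"
  using se_mult[of f 1 1] by simp
lemma se_one_sa: "star_endo f \<Longrightarrow> sa (f 1)"
  using se_cstar[of f 1] by (simp add: sa_def)
lemma se_one_right: "star_endo f \<Longrightarrow> f a * f 1 = f a"
  using se_mult[of f a 1] by simp
lemma se_one_left: "star_endo f \<Longrightarrow> f 1 * f a = f a"
  using se_mult[of f 1 a] by simp

definition re_part :: "'a::cstar_algebra \<Rightarrow> 'a" where "re_part a = (1/2::real) *\<^sub>R (a + cstar a)"
definition im_part :: "'a::cstar_algebra \<Rightarrow> 'a" where "im_part a = (-1/2::real) *\<^sub>R (jj * (a - cstar a))"

lemma sa_re_part: "sa (re_part a)" by (simp add: re_part_def sa_def add.commute)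
lemma sa_im_part: "sa (im_part a)"
proof -
  have "cstar (jj * (a - cstar a)) = (cstar a - a) * (- jj)" by (simp add: cstar_jj)
  also have "\<dots> = jj * (a - cstar a)" by (simp add: jj_comm algebra_simps)
  finally show ?thesis by (simp add: im_part_def sa_def)
qed
lemma re_im_decomp: "a = re_part a + jj * im_part a"
proof -
  have "jj * im_part a = (-1/2::real) *\<^sub>R ((jj * jj) * (a - cstar a))" by (simp add: im_part_def mult.assoc)
  also have "\<dots> = (1/2::real) *\<^sub>R (a - cstar a)" by (simp add: jj_jj algebra_simps)
  finally have j: "jj * im_part a = (1/2::real) *\<^sub>R (a - cstar a)" .
  have "re_part a + jj * im_part a = (1/2::real) *\<^sub>R (a + cstar a) + (1/2::real) *\<^sub>R (a - cstar a)"
    by (simp add: re_part_def j)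
  also have "\<dots> = (1/2::real) *\<^sub>R ((a + cstar a) + (a - cstar a))" by (simp only: scaleR_add_right)
  also have "(a + cstar a) + (a - cstar a) = 2 *\<^sub>R a" by (simp add: scaleR_2)
  finally show ?thesis by simp
qed
lemma re_im_cstar: "cstar a = re_part a - jj * im_part a"
proof -
  have "cstar a = cstar (re_part a + jj * im_part a)" using re_im_decomp[of a] by simp
  also have "\<dots> = re_part a + im_part a * (- jj)"
    using sa_re_part[of a] sa_im_part[of a] by (simp add: sa_def cstar_jj)
  finally show ?thesis by (simp add: jj_comm)
qed
lemma norm_re_part: "norm (re_part a) \<le> norm a"
proof -
  have "norm (re_part a) = (1/2) * norm (a + cstar a)" by (simp add: re_part_def)
  also have "\<dots> \<le> (1/2) * (norm a + norm (cstar a))" by (intro mult_left_mono norm_triangle_ineq) auto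
  finally show ?thesis by simp
qed
lemma norm_im_part: "norm (im_part a) \<le> norm a"
proof -
  have "norm (im_part a) = (1/2) * norm (jj * (a - cstar a))" by (simp add: im_part_def)
  also have "\<dots> \<le> (1/2) * (norm (jj::'a) * norm (a - cstar a))" by (intro mult_left_mono norm_mult_ineq) auto
  also have "\<dots> \<le> (1/2) * (norm a + norm (cstar a))"
    using norm_triangle_ineq4[of a "cstar a"] by simp
  finally show ?thesis by simp
qed

lemma sa_diff_squares: assumes "sa h"
  shows "h = cstar (1 + (1/4::real) *\<^sub>R h) * (1 + (1/4::real) *\<^sub>R h) - cstar (1 - (1/4::real) *\<^sub>R h) * (1 - (1/4::real) *\<^sub>R h)"
proof -
  have "cstar (1 + (1/4::real) *\<^sub>R h) * (1 + (1/4::real) *\<^sub>R h) - cstar (1 - (1/4::real) *\<^sub>R h) * (1 - (1/4::real) *\<^sub>R h)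
      = (1 + (1/4::real) *\<^sub>R h) * (1 + (1/4::real) *\<^sub>R h) - (1 - (1/4::real) *\<^sub>R h) * (1 - (1/4::real) *\<^sub>R h)"
    using assms by (simp add: sa_def)
  also have "\<dots> = (1/4::real) *\<^sub>R h + (1/4::real) *\<^sub>R h + (1/4::real) *\<^sub>R h + (1/4::real) *\<^sub>R h"
    by (simp add: algebra_simps)
  also have "\<dots> = h" by (simp only: scaleR_add_left[symmetric]) simp
  finally show ?thesis by simp
qed

lemma positive_el_sa: "positive_el a \<Longrightarrow> sa a" by (auto simp: positive_el_def sa_def)

lemma posmap_sa: assumes "clinear_map L" "positive_map L" "sa h" shows "sa (L h)"
proof -
  define u where "u = 1 + (1/4::real) *\<^sub>R h"
  define v where "v = 1 - (1/4::real) *\<^sub>R h"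
  have "h = cstar u * u - cstar v * v" using sa_diff_squares[OF assms(3)] by (simp add: u_def v_def)
  then have "L h = L (cstar u * u) - L (cstar v * v)" using cl_diff[OF assms(1)] by metis
  moreover have "positive_el (L (cstar u * u))" "positive_el (L (cstar v * v))"
    using assms(2) unfolding positive_map_def positive_el_def by blast+
  ultimately show ?thesis by (simp add: positive_el_sa sa_diff)
qed

lemma posmap_cstar: assumes "clinear_map L" "positive_map L" shows "L (cstar a) = cstar (L a)"
proof -
  have sh: "sa (L (re_part a))" and sk: "sa (L (im_part a))"
    using posmap_sa[OF assms] sa_re_part sa_im_part by blast+
  have "L (cstar a) = L (re_part a) - jj * L (im_part a)"
    by (subst re_im_cstar) (simp add: cl_diff[OF assms(1)] cl_jj[OF assms(1)])
  moreover have "L a = L (re_part a) + jj * L (im_part a)"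
    by (subst re_im_decomp) (simp add: cl_add[OF assms(1)] cl_jj[OF assms(1)])
  moreover have "cstar (L (re_part a) + jj * L (im_part a)) = L (re_part a) - jj * L (im_part a)"
    using sh sk by (simp add: sa_def cstar_jj jj_comm)
  ultimately show ?thesis by simp
qed

lemma posmap_pos: "positive_map L \<Longrightarrow> pos a \<Longrightarrow> pos (L a)"
  by (simp add: positive_map_def positive_el_iff_pos)

lemma posmap_bound: assumes "clinear_map L" "positive_map L" "pos (1 - L 1)"
  shows "norm (L a) \<le> 2 * norm a"
proof -
  have sab: "norm (L h) \<le> norm h" if "sa h" for h
  proof -
    define l where "l = norm h"
    have l0: "l \<ge> 0" by (simp add: l_def)
    have p1: "pos (L (l *\<^sub>R 1 - h))" by (rule posmap_pos[OF assms(2) pos_bound_sub[OF that]]) (simp add: l_def)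
    have p2: "pos (L (l *\<^sub>R 1 + h))" by (rule posmap_pos[OF assms(2) pos_bound_add[OF that]]) (simp add: l_def)
    have p3: "pos (l *\<^sub>R (1 - L 1))" by (rule pos_scaleR[OF assms(3) l0])
    have "l *\<^sub>R 1 - L h = l *\<^sub>R (1 - L 1) + L (l *\<^sub>R 1 - h)"
      by (simp add: cl_diff[OF assms(1)] cl_scaleR[OF assms(1)] algebra_simps)
    then have q1: "pos (l *\<^sub>R 1 - L h)" using pos_add[OF p3 p1] by simp
    have "l *\<^sub>R 1 + L h = l *\<^sub>R (1 - L 1) + L (l *\<^sub>R 1 + h)"
      by (simp add: cl_add[OF assms(1)] cl_scaleR[OF assms(1)] algebra_simps)
    then have q2: "pos (l *\<^sub>R 1 + L h)" using pos_add[OF p3 p2] by simp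
    show ?thesis unfolding l_def[symmetric]
      by (rule pos_two_sided_bound[OF posmap_sa[OF assms(1,2) that] l0 q1 q2])
  qed
  have "L a = L (re_part a) + jj * L (im_part a)"
    by (subst re_im_decomp) (simp add: cl_add[OF assms(1)] cl_jj[OF assms(1)])
  then have "norm (L a) \<le> norm (L (re_part a)) + norm (jj::'a) * norm (L (im_part a))"
    by (metis norm_triangle_le norm_mult_ineq add_left_mono)
  also have "\<dots> \<le> norm (re_part a) + norm (im_part a)"
    using sab[OF sa_re_part, of a] sab[OF sa_im_part, of a] by simp
  also have "\<dots> \<le> 2 * norm a" using norm_re_part[of a] norm_im_part[of a] by simp
  finally show ?thesis .
qed

lemma posmap_continuous: assumes "clinear_map L" "positive_map L" "pos (1 - L 1)"
  shows "continuous_on UNIV L"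
proof -
  have "bounded_linear L"
    by (rule bounded_linear_intro[where K=2])
       (use cl_add[OF assms(1)] cl_scaleR[OF assms(1)] posmap_bound[OF assms] in \<open>auto simp: mult.commute\<close>)
  then show ?thesis by (rule linear_continuous_on)
qed



section \<open>Single-parameter transfer maps\<close>

definition ta1 :: "('a::cstar_algebra \<Rightarrow> 'a) \<Rightarrow> ('a \<Rightarrow> 'a) \<Rightarrow> bool" where
  "ta1 f L \<longleftrightarrow> star_endo f \<and> clinear_map L \<and> positive_map L \<and> (\<forall>a b. L (f a * b) = a * L b)"

definition nd1 :: "('a::cstar_algebra \<Rightarrow> 'a) \<Rightarrow> ('a \<Rightarrow> 'a) \<Rightarrow> bool" where
  "nd1 f L \<longleftrightarrow> (\<forall>c. f (L (f c)) = f c)"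

definition cp1 :: "('a::cstar_algebra \<Rightarrow> 'a) \<Rightarrow> ('a \<Rightarrow> 'a) \<Rightarrow> bool" where
  "cp1 f L \<longleftrightarrow> (\<forall>a. f (L a) = f 1 * a * f 1)"

definition corner :: "'a::cstar_algebra \<Rightarrow> 'a set" where
  "corner e = {e * a * e | a. True}"

context
  fixes f L :: "'a::cstar_algebra \<Rightarrow> 'a"
  assumes ta: "ta1 f L"
begin

lemma ta_se: "star_endo f" using ta by (simp add: ta1_def)
lemma ta_cl: "clinear_map L" using ta by (simp add: ta1_def)
lemma ta_pm: "positive_map L" using ta by (simp add: ta1_def)
lemma ta_left: "L (f a * b) = a * L b" using ta by (simp add: ta1_def)
lemma ta_cstar: "L (cstar a) = cstar (L a)" by (rule posmap_cstar[OF ta_cl ta_pm])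

lemma ta_right: "L (b * f c) = L b * c"
proof -
  have "cstar (L (b * f c)) = L (cstar (b * f c))" by (rule ta_cstar[symmetric])
  also have "cstar (b * f c) = f (cstar c) * cstar b" by (simp add: se_cstar[OF ta_se])
  also have "L (f (cstar c) * cstar b) = cstar c * L (cstar b)" by (rule ta_left)
  also have "\<dots> = cstar c * cstar (L b)" by (simp add: ta_cstar)
  finally have "cstar (L (b * f c)) = cstar (L b * c)" by simp
  then show ?thesis by (metis cstar_cstar)
qed

lemma ta_f1: "L (f c) = c * L 1" using ta_left[of c 1] by simp
lemma ta_f2: "L (f c) = L 1 * c" using ta_right[of 1 c] by simp
lemma ta_central: "c * L 1 = L 1 * c" using ta_f1 ta_f2 by metis

lemma ta_kill_left: "L ((1 - f 1) * z) = 0"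
  using ta_left[of 1 z] by (simp add: algebra_simps cl_diff[OF ta_cl])
lemma ta_kill_right: "L (z * (1 - f 1)) = 0"
  using ta_right[of z 1] by (simp add: algebra_simps cl_diff[OF ta_cl])

lemma ta_corner: "L a = L (f 1 * a * f 1)"
proof -
  define e where "e = f 1"
  have "a = e * a * e + (e * a) * (1 - e) + (1 - e) * a" by (simp add: algebra_simps)
  then have "L a = L (e * a * e) + L ((e * a) * (1 - e)) + L ((1 - e) * a)"
    by (metis cl_add[OF ta_cl])
  then show ?thesis using ta_kill_left[of a] ta_kill_right[of "e * a"] by (simp add: e_def)
qed

lemma nd_to_cp: assumes "nd1 f L" "range f = corner (f 1)" shows "cp1 f L"
  unfolding cp1_def
proof
  fix a
  have "f 1 * a * f 1 \<in> range f" using assms(2) by (auto simp: corner_def)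
  then obtain c where c: "f 1 * a * f 1 = f c" by auto
  have "f (L a) = f (L (f c))" using ta_corner[of a] c by simp
  also have "\<dots> = f c" using assms(1) by (simp add: nd1_def)
  finally show "f (L a) = f 1 * a * f 1" using c by simp
qed

context
  assumes nd: "nd1 f L"
begin

lemma nd_f1: "f (L 1) = f 1" using nd unfolding nd1_def by (metis ta_f1 mult_1_left)

lemma nd_idem: "L 1 * L 1 = L 1"
proof -
  have "L (f (L 1)) = L 1 * L 1" by (rule ta_f1)
  moreover have "L (f (L 1)) = L 1" using nd_f1 ta_f1[of 1] by simp
  ultimately show ?thesis by simp
qed

lemma nd_sa: "sa (L 1)" using ta_cstar[of 1] by (simp add: sa_def)

lemma nd_cproj: "central_projection (L 1)"
  using nd_sa nd_idem ta_central unfolding central_projection_def sa_def by metis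

lemma nd_ker: "f (1 - L 1) = 0" using nd_f1 by (simp add: se_diff[OF ta_se])

lemma nd_range: "L b = L 1 * L b"
proof -
  have "L (f (1 - L 1) * b) = (1 - L 1) * L b" by (rule ta_left)
  then have "(1 - L 1) * L b = 0" using nd_ker by (simp add: cl_zero[OF ta_cl])
  then show ?thesis by (simp add: algebra_simps)
qed

lemma nd_inj: assumes "f (L 1 * z) = 0" shows "L 1 * z = 0"
proof -
  have "L (f (L 1 * z)) = L 1 * (L 1 * z)" using ta_f2 by simp
  also have "\<dots> = L 1 * z" using nd_idem by (simp add: mult.assoc[symmetric])
  finally show ?thesis using assms by (simp add: cl_zero[OF ta_cl])
qed

lemma nd_fc: "f c = f (L 1 * c)"
proof -
  have "f ((1 - L 1) * c) = 0" using nd_ker by (simp add: se_mult[OF ta_se])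
  then show ?thesis by (simp add: algebra_simps se_diff[OF ta_se])
qed

lemma nd_bij: "bij_betw f (range ((*) (L 1))) (range f)"
  unfolding bij_betw_def
proof
  show "inj_on f (range ((*) (L 1)))"
  proof (rule inj_onI)
    fix x y assume "x \<in> range ((*) (L 1))" "y \<in> range ((*) (L 1))" "f x = f y"
    then obtain u v where uv: "x = L 1 * u" "y = L 1 * v" by auto
    have "f (L 1 * (u - v)) = 0" using \<open>f x = f y\<close> uv by (simp add: algebra_simps se_diff[OF ta_se])
    then have "L 1 * (u - v) = 0" by (rule nd_inj)
    then show "x = y" using uv by (simp add: algebra_simps)
  qed
  show "f ` range ((*) (L 1)) = range f"
    using nd_fc by auto
qed

end
end

lemma cp_nd: assumes "star_endo f" "cp1 f L" shows "nd1 f L"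
  unfolding nd1_def
proof
  fix c
  have "f (L (f c)) = f 1 * f c * f 1" using assms(2) by (simp add: cp1_def)
  also have "\<dots> = f c" by (simp add: se_one_left[OF assms(1)] se_one_right[OF assms(1)] mult.assoc[symmetric])
  finally show "f (L (f c)) = f c" .
qed

lemma cp_range: assumes "star_endo f" "cp1 f L" shows "range f = corner (f 1)"
proof
  show "range f \<subseteq> corner (f 1)"
  proof
    fix y assume "y \<in> range f"
    then obtain c where "y = f c" by auto
    then have "y = f 1 * f c * f 1" by (simp add: se_one_left[OF assms(1)] se_one_right[OF assms(1)] mult.assoc[symmetric])
    then show "y \<in> corner (f 1)" unfolding corner_def using \<open>y = f c\<close> by auto
  qed
  show "corner (f 1) \<subseteq> range f"
  proof
    fix y assume "y \<in> corner (f 1)"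
    then obtain a where "y = f 1 * a * f 1" by (auto simp: corner_def)
    then have "y = f (L a)" using assms(2) by (simp add: cp1_def)
    then show "y \<in> range f" by simp
  qed
qed

section \<open>Corners\<close>

lemma corner_iff: assumes "e * e = e" shows "y \<in> corner e \<longleftrightarrow> e * y * e = y"
proof
  assume "y \<in> corner e"
  then obtain a where "y = e * a * e" by (auto simp: corner_def)
  then show "e * y * e = y" using assms by (simp add: mult.assoc) (metis mult.assoc)
next
  assume "e * y * e = y"
  then show "y \<in> corner e" unfolding corner_def by (auto intro!: exI[of _ y])
qed

lemma corner_hereditary: assumes idem: "e * e = e" and sae: "sa e"
  shows "hereditary_subalgebra (corner (e::'a::cstar_algebra))"
proof -
  note ci = corner_iff[OF idem]
  have ee: "e * (e * x) = e * x" "(x * e) * e = x * e" for x using idem by (simp_all add: mult.assoc[symmetric] mult.assoc)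
  have sub: "cstar_subalgebra (corner e)"
    unfolding cstar_subalgebra_def
  proof (intro conjI ballI allI)
    show "0 \<in> corner e" by (simp add: ci)
  next
    fix a b assume "a \<in> corner e" "b \<in> corner e"
    then have a: "e * a * e = a" and b: "e * b * e = b" by (simp_all add: ci)
    show "a + b \<in> corner e" using a b by (simp add: ci algebra_simps)
    have ea: "e * a = a" by (metis a idem mult.assoc)
    have be: "b * e = b" by (metis b idem mult.assoc)
    have "e * (a * b) * e = (e * a) * (b * e)" by (simp add: mult.assoc)
    then show "a * b \<in> corner e" using ea be by (simp add: ci)
  next
    fix c a assume "a \<in> corner e"
    then have a: "e * a * e = a" by (simp add: ci)
    show "c *\<^sub>C a \<in> corner e" using a by (simp add: ci cscale_mult_left cscale_mult_right)
  next
    fix a assume "a \<in> corner e"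
    then have a: "e * a * e = a" by (simp add: ci)
    show "cstar a \<in> corner e" using sae a cstar_mult[of "e * a" e] by (simp add: ci sa_def mult.assoc)
  next
    have "corner e = {y. e * y * e = y}" using ci by auto
    moreover have "closed {y. e * y * e = (y::'a)}"
      by (intro closed_Collect_eq continuous_intros)
    ultimately show "closed (corner e)" by simp
  qed
  have her: "a \<in> corner e" if b: "b \<in> corner e" and pa: "positive_el a" and pba: "positive_el (b - a)" for a b
  proof -
    obtain c where c: "a = cstar c * c" using pa by (auto simp: positive_el_def)
    obtain d where d: "b - a = cstar d * d" using pba by (auto simp: positive_el_def)
    define g where "g = 1 - e"
    have sag: "cstar g = g" using sae by (simp add: g_def sa_def)
    have beb: "e * b * e = b" using b by (simp add: ci)
    have gb: "g * b = 0"
    proof -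
      have "g * b = g * e * b * e" using beb by (simp add: mult.assoc)
      also have "g * e = 0" using idem by (simp add: g_def algebra_simps)
      finally show ?thesis by simp
    qed
    have "cstar (d * g) * (d * g) + cstar (c * g) * (c * g) = g * (cstar d * d) * g + g * (cstar c * c) * g"
      using sag by (simp add: mult.assoc)
    also have "\<dots> = g * b * g" using c d by (simp add: algebra_simps)
    also have "\<dots> = 0" using gb by simp
    finally have "c * g = 0" using cstar_sum_zero[of "c * g" "d * g"] by (simp add: add.commute)
    then have ag: "a * g = 0" using c by (simp add: mult.assoc)
    have ga: "g * a = 0"
    proof -
      have "cstar (a * g) = g * a" using c sag by (simp add: mult.assoc)
      then show ?thesis using ag by simp
    qed
    have "a = (e + g) * a * (e + g)" by (simp add: g_def)
    also have "\<dots> = e * a * e" using ag ga by (simp add: algebra_simps)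
    finally show ?thesis by (simp add: ci idem mult.assoc)
  qed
  show ?thesis unfolding hereditary_subalgebra_def using sub her by blast
qed

lemma hereditary_range: assumes se: "star_endo f" and h: "hereditary_subalgebra (range f)"
  shows "range f = corner (f 1)"
proof
  define e where "e = f 1"
  have idem: "e * e = e" and sae: "sa e" using se_one_idem[OF se] se_one_sa[OF se] by (simp_all add: e_def)
  show "range f \<subseteq> corner (f 1)"
  proof
    fix y assume "y \<in> range f"
    then obtain c where "y = f c" by auto
    then have "y = f 1 * f c * f 1" by (simp add: se_one_left[OF se] se_one_right[OF se] mult.assoc[symmetric])
    then show "y \<in> corner (f 1)" unfolding corner_def using \<open>y = f c\<close> by auto
  qed
  have sub: "cstar_subalgebra (range f)" using h by (simp add: hereditary_subalgebra_def)
  have radd: "y + z \<in> range f" if "y \<in> range f" "z \<in> range f" for y z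
    using sub that unfolding cstar_subalgebra_def by blast
  have rsc: "c *\<^sub>C y \<in> range f" if "y \<in> range f" for y c
    using sub that unfolding cstar_subalgebra_def by blast
  have rdiff: "y - z \<in> range f" if "y \<in> range f" "z \<in> range f" for y z
  proof -
    have m: "(complex_of_real (-1)) *\<^sub>C z \<in> range f" by (rule rsc[OF that(2)])
    have "(complex_of_real (-1)) *\<^sub>C z = - z" by (simp only: cscale_of_real) simp
    then have "- z \<in> range f" using m by simp
    then show ?thesis using radd[OF that(1)] by (metis diff_conv_add_uminus)
  qed
  have her: "a \<in> range f" if "b \<in> range f" "positive_el a" "positive_el (b - a)" for a b
    using h that unfolding hereditary_subalgebra_def by blast
  have e_in: "e \<in> range f" by (simp add: e_def)
  have sq_in: "cstar (u * e) * (u * e) \<in> range f" for u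
  proof -
    define w where "w = u * e"
    define a where "a = cstar w * w"
    define M where "M = norm a"
    have we: "w * e = w" using idem by (simp add: w_def mult.assoc)
    have ew: "cstar w = e * cstar w" using we sae by (metis cstar_mult sa_def)
    have "pos (M *\<^sub>R 1 - a)" by (rule pos_bound_sub) (simp_all add: M_def a_def sa_cstar_mult)
    then obtain r where r: "M *\<^sub>R 1 - a = cstar r * r" using positive_el_iff_pos unfolding positive_el_def by blast
    have "M *\<^sub>R e - a = e * (M *\<^sub>R 1 - a) * e"
    proof -
      have "e * a * e = a" unfolding a_def by (metis ew we mult.assoc)
      then show ?thesis using idem by (simp add: algebra_simps)
    qed
    also have "\<dots> = cstar (r * e) * (r * e)" using r sae by (simp add: sa_def mult.assoc)
    finally have pd: "positive_el (M *\<^sub>R e - a)" unfolding positive_el_def by blast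
    have "M *\<^sub>R e \<in> range f" using rsc[OF e_in, of "complex_of_real M"] by (simp add: cscale_of_real)
    moreover have "positive_el a" unfolding a_def positive_el_def by blast
    ultimately show ?thesis using her pd by (simp add: a_def w_def)
  qed
  have sa_in: "e * h * e \<in> range f" if "sa h" for h
  proof -
    define u where "u = 1 + (1/4::real) *\<^sub>R h"
    define v where "v = 1 - (1/4::real) *\<^sub>R h"
    have "h = cstar u * u - cstar v * v" using sa_diff_squares[OF that] by (simp add: u_def v_def)
    then have "e * h * e = e * (cstar u * u - cstar v * v) * e" by (rule arg_cong[where f="\<lambda>x. e * x * e"])
    also have "\<dots> = e * (cstar u * u) * e - e * (cstar v * v) * e" by (simp add: algebra_simps)
    also have "\<dots> = cstar (u * e) * (u * e) - cstar (v * e) * (v * e)"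
      using sae by (simp add: sa_def mult.assoc)
    finally show ?thesis using rdiff[OF sq_in sq_in] by simp
  qed
  show "corner (f 1) \<subseteq> range f"
  proof
    fix y assume "y \<in> corner (f 1)"
    then obtain a where y: "y = e * a * e" by (auto simp: corner_def e_def)
    have j: "e * (jj * im_part a) * e = jj * (e * im_part a * e)"
      by (simp add: mult.assoc[symmetric] jj_comm[of e, symmetric])
    have "y = e * (re_part a + jj * im_part a) * e" using y re_im_decomp[of a] by simp
    also have "\<dots> = e * re_part a * e + e * (jj * im_part a) * e" by (simp add: algebra_simps)
    finally have "y = e * re_part a * e + jj * (e * im_part a * e)" using j by simp
    moreover have "jj * (e * im_part a * e) \<in> range f"
      using rsc[OF sa_in[OF sa_im_part], of "\<i>"] by (simp add: jj_mult_left)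
    ultimately show "y \<in> range f" using radd[OF sa_in[OF sa_re_part]] by simp
  qed
qed



section \<open>Central projections implementing the bijection\<close>

lemma cproj_idem: "central_projection Q \<Longrightarrow> Q * Q = Q" unfolding central_projection_def by blast
lemma cproj_sa: "central_projection Q \<Longrightarrow> cstar Q = Q" unfolding central_projection_def by blast
lemma cproj_comm: "central_projection Q \<Longrightarrow> Q * a = a * Q" unfolding central_projection_def by blast

lemma cproj_range_iff: assumes "central_projection Q" shows "z \<in> range ((*) Q) \<longleftrightarrow> Q * z = z"
proof
  assume "z \<in> range ((*) Q)"
  then obtain u where "z = Q * u" by auto
  then show "Q * z = z" using cproj_idem[OF assms] by (simp add: mult.assoc[symmetric])
next
  assume "Q * z = z"
  then show "z \<in> range ((*) Q)" using rangeI[of "(*) Q" z] by simp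
qed

context
  fixes f :: "'a::cstar_algebra \<Rightarrow> 'a" and Q :: 'a
  assumes se: "star_endo f" and cp: "central_projection Q"
    and bij: "bij_betw f (range ((*) Q)) (range f)"
begin

lemma pj_inj_on: "inj_on f (range ((*) Q))" using bij by (rule bij_betw_imp_inj_on)
lemma pj_surj: "f ` range ((*) Q) = range f" using bij by (rule bij_betw_imp_surj_on)

lemma pj_ker: "f (1 - Q) = 0"
proof -
  have "f (1 - Q) \<in> f ` range ((*) Q)" using pj_surj by simp
  then obtain z where z: "f (1 - Q) = f (Q * z)" by auto
  have "f (Q * z) = f (Q * z * Q)" using cproj_comm[OF cp, of z] cproj_idem[OF cp] by (metis mult.assoc)
  also have "\<dots> = f (Q * z) * f Q" by (simp add: se_mult[OF se])
  finally have 1: "f (Q * z) = f (Q * z) * f Q" .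
  have "f (1 - Q) * f Q = f ((1 - Q) * Q)" by (simp add: se_mult[OF se])
  also have "\<dots> = 0" using cproj_idem[OF cp] by (simp add: algebra_simps se_zero[OF se])
  finally have 2: "f (1 - Q) * f Q = 0" .
  show ?thesis using 1 2 z by simp
qed

lemma pj_fQ: "f Q = f 1" using pj_ker by (simp add: se_diff[OF se])

lemma pj_inj: assumes "f (Q * z) = 0" shows "Q * z = 0"
proof -
  have "f (Q * z) = f (Q * 0)" using assms by (simp add: se_zero[OF se])
  then show ?thesis using inj_onD[OF pj_inj_on] by (metis mult_zero_right rangeI)
qed

lemma pj_inj_eq: assumes "z \<in> range ((*) Q)" "w \<in> range ((*) Q)" "f z = f w" shows "z = w"
  using inj_onD[OF pj_inj_on assms(3,1,2)] .

end

lemma pj_unique: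
  assumes se: "star_endo f"
    and cp: "central_projection Q" and bij: "bij_betw f (range ((*) Q)) (range f)"
    and cp': "central_projection Q'" and bij': "bij_betw f (range ((*) Q')) (range f)"
  shows "Q = Q'"
proof -
  have "f (Q * (1 - Q')) = f Q * f (1 - Q')" by (simp add: se_mult[OF se])
  also have "\<dots> = 0" using pj_ker[OF se cp' bij'] by simp
  finally have "Q * (1 - Q') = 0" by (rule pj_inj[OF se cp bij])
  then have 1: "Q = Q * Q'" by (simp add: algebra_simps)
  have "f (Q' * (1 - Q)) = f Q' * f (1 - Q)" by (simp add: se_mult[OF se])
  also have "\<dots> = 0" using pj_ker[OF se cp bij] by simp
  finally have "Q' * (1 - Q) = 0" by (rule pj_inj[OF se cp' bij'])
  then have 2: "Q' = Q' * Q" by (simp add: algebra_simps)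
  show ?thesis using 1 2 cproj_comm[OF cp, of Q'] by simp
qed

section \<open>The constructed transfer map\<close>

definition Lc :: "('a::cstar_algebra \<Rightarrow> 'a) \<Rightarrow> 'a \<Rightarrow> 'a \<Rightarrow> 'a" where
  "Lc f Q a = the_inv_into (range ((*) Q)) f (f 1 * a * f 1)"

context
  fixes f :: "'a::cstar_algebra \<Rightarrow> 'a" and Q :: 'a
  assumes se: "star_endo f" and cp: "central_projection Q"
    and bij: "bij_betw f (range ((*) Q)) (range f)"
    and re: "range f = corner (f 1)"
begin

lemma Lc_in: "Lc f Q a \<in> range ((*) Q)" and Lc_f: "f (Lc f Q a) = f 1 * a * f 1"
proof -
  have "f 1 * a * f 1 \<in> f ` range ((*) Q)" using pj_surj[OF se cp bij] re by (auto simp: corner_def)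
  then show "Lc f Q a \<in> range ((*) Q)" "f (Lc f Q a) = f 1 * a * f 1"
    unfolding Lc_def using pj_inj_on[OF se cp bij]
    by (auto intro: the_inv_into_into f_the_inv_into_f)
qed

lemma Lc_eq: assumes "z \<in> range ((*) Q)" "f z = f 1 * a * f 1" shows "Lc f Q a = z"
  unfolding Lc_def by (rule the_inv_into_f_eq[OF pj_inj_on[OF se cp bij] assms(2,1)])

lemma Lc_cp1: "cp1 f (Lc f Q)" by (simp add: cp1_def Lc_f)

lemma Lc_one: "Lc f Q 1 = Q"
proof (rule Lc_eq)
  show "Q \<in> range ((*) Q)" by (metis mult_1_right rangeI)
  show "f Q = f 1 * 1 * f 1" using pj_fQ[OF se cp bij] se_one_idem[OF se] by simp
qed

lemma Lc_Q: "Q * Lc f Q a = Lc f Q a" using Lc_in cproj_range_iff[OF cp] by blast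

lemma Lc_clinear: "clinear_map (Lc f Q)"
  unfolding clinear_map_def
proof (intro conjI allI)
  fix a b
  show "Lc f Q (a + b) = Lc f Q a + Lc f Q b"
  proof (rule Lc_eq)
    show "Lc f Q a + Lc f Q b \<in> range ((*) Q)"
      using Lc_Q[of a] Lc_Q[of b] cproj_range_iff[OF cp] by (simp add: algebra_simps)
    show "f (Lc f Q a + Lc f Q b) = f 1 * (a + b) * f 1"
      by (simp add: se_add[OF se] Lc_f algebra_simps)
  qed
next
  fix c a
  show "Lc f Q (c *\<^sub>C a) = c *\<^sub>C Lc f Q a"
  proof (rule Lc_eq)
    show "c *\<^sub>C Lc f Q a \<in> range ((*) Q)"
      using Lc_Q[of a] cproj_range_iff[OF cp] by (simp add: cscale_mult_right)
    show "f (c *\<^sub>C Lc f Q a) = f 1 * (c *\<^sub>C a) * f 1"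
      by (simp add: se_cscale[OF se] Lc_f cscale_mult_left cscale_mult_right)
  qed
qed

lemma Lc_left: "Lc f Q (f a * b) = a * Lc f Q b"
proof (rule Lc_eq)
  show "a * Lc f Q b \<in> range ((*) Q)"
    using Lc_Q[of b] cproj_range_iff[OF cp] cproj_comm[OF cp] by (metis mult.assoc)
  have "f (a * Lc f Q b) = f a * (f 1 * b * f 1)" by (simp add: se_mult[OF se] Lc_f)
  also have "\<dots> = (f a * f 1) * b * f 1" by (simp add: mult.assoc)
  also have "\<dots> = (f 1 * f a) * b * f 1" using se_one_left[OF se, of a] se_one_right[OF se, of a] by simp
  also have "\<dots> = f 1 * (f a * b) * f 1" by (simp add: mult.assoc)
  finally show "f (a * Lc f Q b) = f 1 * (f a * b) * f 1" .
qed

lemma Lc_pos: "positive_map (Lc f Q)"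
  unfolding positive_map_def
proof (intro allI impI)
  fix a :: 'a assume "positive_el a"
  then obtain c where c: "a = cstar c * c" by (auto simp: positive_el_def)
  define e where "e = f 1"
  have idem: "e * e = e" and sae: "sa e" using se_one_idem[OF se] se_one_sa[OF se] by (simp_all add: e_def)
  have eae: "e * a * e = cstar (c * e) * (c * e)" using c sae by (simp add: sa_def mult.assoc)
  have "pos (e * a * e)" unfolding eae by (rule pos_cstar_mult)
  then obtain s where s: "sa s" "s * s = e * a * e" "\<forall>z. z * (e * a * e) = (e * a * e) * z \<longrightarrow> z * s = s * z"
    using pos_sqrt by blast
  have "e * (e * a * e) = (e * a * e) * e" using idem by (simp add: mult.assoc[symmetric]) (simp add: mult.assoc)
  then have es: "e * s = s * e" using s(3) by blast
  define t where "t = e * s"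
  have tt: "t * t = e * a * e"
  proof -
    have "t * t = e * (s * e) * s" by (simp add: t_def mult.assoc)
    also have "\<dots> = (e * e) * (s * s)" by (simp add: es[symmetric] mult.assoc)
    finally show ?thesis using idem s(2) by (simp add: mult.assoc[symmetric])
  qed
  have sat: "sa t" using s(1) sae es by (simp add: t_def sa_def)
  have "t \<in> corner e"
  proof -
    have "e * t * e = t" using es idem by (simp add: t_def mult.assoc) (metis es idem mult.assoc)
    then show ?thesis by (simp add: corner_iff[OF idem])
  qed
  then have "t \<in> f ` range ((*) Q)" using re pj_surj[OF se cp bij] by (simp add: e_def)
  then obtain v where v: "v \<in> range ((*) Q)" "f v = t" by auto
  have Qv: "Q * v = v" using v(1) cproj_range_iff[OF cp] by blast
  have "Q * (cstar v * v) = (Q * cstar v) * v" by (simp add: mult.assoc)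
  also have "\<dots> = cstar v * (Q * v)" using cproj_comm[OF cp, of "cstar v"] by (simp add: mult.assoc)
  finally have "Q * (cstar v * v) = cstar v * (Q * v)" .
  then have w_in: "cstar v * v \<in> range ((*) Q)" using Qv cproj_range_iff[OF cp] by simp
  have "f (cstar v * v) = cstar t * t" using v(2) by (simp add: se_mult[OF se] se_cstar[OF se])
  also have "\<dots> = f 1 * a * f 1" using sat tt by (simp add: sa_def e_def)
  finally have "Lc f Q a = cstar v * v" by (rule Lc_eq[OF w_in])
  then show "positive_el (Lc f Q a)" unfolding positive_el_def by blast
qed

lemma Lc_ta1: "ta1 f (Lc f Q)"
  unfolding ta1_def using se Lc_clinear Lc_pos Lc_left by blast

lemma Lc_cont: "continuous_on UNIV (Lc f Q)"
proof (rule posmap_continuous[OF Lc_clinear Lc_pos])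
  have "sa (1 - Q)" using cproj_sa[OF cp] by (simp add: sa_def)
  moreover have "(1 - Q) * (1 - Q) = 1 - Q" using cproj_idem[OF cp] by (simp add: algebra_simps)
  ultimately show "pos (1 - Lc f Q 1)" using pos_square[of "1 - Q"] by (simp add: Lc_one)
qed

end



context
  fixes \<alpha> :: "'g::linordered_ab_group_add \<Rightarrow> 'a::cstar_algebra \<Rightarrow> 'a"
  assumes es: "endo_semigroup \<alpha>"
begin

lemma es_se: "0 \<le> x \<Longrightarrow> star_endo (\<alpha> x)" using es by (simp add: endo_semigroup_def)
lemma es_comp: "0 \<le> x \<Longrightarrow> 0 \<le> y \<Longrightarrow> \<alpha> x (\<alpha> y a) = \<alpha> (x + y) a"
  using es unfolding endo_semigroup_def by (metis comp_apply)

lemma tr_ta1: "transfer_action \<alpha> L \<Longrightarrow> 0 \<le> x \<Longrightarrow> ta1 (\<alpha> x) (L x)"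
  unfolding transfer_action_def ta1_def using es_se by blast

lemma tr_comp: "transfer_action \<alpha> L \<Longrightarrow> 0 \<le> x \<Longrightarrow> 0 \<le> y \<Longrightarrow> L (x + y) a = L y (L x a)"
  unfolding transfer_action_def by (metis comp_apply)

lemma nd_nd1: "nondegenerate_transfer_action \<alpha> L \<Longrightarrow> 0 \<le> x \<Longrightarrow> nd1 (\<alpha> x) (L x)"
  unfolding nondegenerate_transfer_action_def nd1_def by (metis comp_apply)

lemma cp_cp1: "complete_transfer_action \<alpha> L \<Longrightarrow> 0 \<le> x \<Longrightarrow> cp1 (\<alpha> x) (L x)"
  unfolding complete_transfer_action_def cp1_def by blast

lemma A1: assumes "complete_transfer_action \<alpha> L" shows "nondegenerate_transfer_action \<alpha> L"
proof -
  have tr: "transfer_action \<alpha> L" using assms by (simp add: complete_transfer_action_def)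
  have "\<alpha> x \<circ> L x \<circ> \<alpha> x = \<alpha> x" if "0 \<le> x" for x
    using cp_nd[OF es_se[OF that] cp_cp1[OF assms that]] by (auto simp: nd1_def)
  then show ?thesis using tr by (simp add: nondegenerate_transfer_action_def)
qed

lemma A2: assumes "complete_transfer_action \<alpha> L" "0 \<le> x" shows "range (\<alpha> x) = corner (\<alpha> x 1)"
  by (rule cp_range[OF es_se[OF assms(2)] cp_cp1[OF assms]])

lemma A3: assumes "0 \<le> x" "range (\<alpha> x) = corner (\<alpha> x 1)" shows "hereditary_subalgebra (range (\<alpha> x))"
  using corner_hereditary[OF se_one_idem[OF es_se[OF assms(1)]] se_one_sa[OF es_se[OF assms(1)]]] assms(2) by simp

lemma A4: assumes "0 \<le> x" "hereditary_subalgebra (range (\<alpha> x))" shows "range (\<alpha> x) = corner (\<alpha> x 1)"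
  by (rule hereditary_range[OF es_se[OF assms(1)] assms(2)])

lemma A5: assumes "nondegenerate_transfer_action \<alpha> L" "\<And>x. 0 \<le> x \<Longrightarrow> range (\<alpha> x) = corner (\<alpha> x 1)"
  shows "complete_transfer_action \<alpha> L"
proof -
  have tr: "transfer_action \<alpha> L" using assms by (simp add: nondegenerate_transfer_action_def)
  have "cp1 (\<alpha> x) (L x)" if "0 \<le> x" for x
    by (rule nd_to_cp[OF tr_ta1[OF tr that] nd_nd1[OF assms(1) that] assms(2)[OF that]])
  then show ?thesis using tr by (simp add: complete_transfer_action_def cp1_def)
qed

lemma B1: assumes nd: "nondegenerate_transfer_action \<alpha> L" and re: "\<And>x. 0 \<le> x \<Longrightarrow> range (\<alpha> x) = corner (\<alpha> x 1)"
  shows "projection_family \<alpha> (\<lambda>x. L x 1)"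
proof -
  have tr: "transfer_action \<alpha> L" using nd by (simp add: nondegenerate_transfer_action_def)
  have cpl: "complete_transfer_action \<alpha> L" by (rule A5[OF nd re])
  have cp: "central_projection (L x 1)" if "0 \<le> x" for x
    by (rule nd_cproj[OF tr_ta1[OF tr that] nd_nd1[OF nd that]])
  have bij: "bij_betw (\<alpha> x) (range ((*) (L x 1))) (range (\<alpha> x))" if "0 \<le> x" for x
    by (rule nd_bij[OF tr_ta1[OF tr that] nd_nd1[OF nd that]])
  have fam: "\<alpha> x (L (x + y) 1) = \<alpha> x 1 * L y 1" if x: "0 \<le> x" and y: "0 \<le> y" for x y
  proof -
    have "L (x + y) 1 = L (y + x) 1" by (simp add: add.commute)
    also have "\<dots> = L x (L y 1)" by (rule tr_comp[OF tr y x])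
    finally have "\<alpha> x (L (x + y) 1) = \<alpha> x 1 * L y 1 * \<alpha> x 1"
      using cp_cp1[OF cpl x] by (simp add: cp1_def)
    also have "\<dots> = \<alpha> x 1 * \<alpha> x 1 * L y 1" using cproj_comm[OF cp[OF y], of "\<alpha> x 1"] by (simp add: mult.assoc)
    also have "\<dots> = \<alpha> x 1 * L y 1" using se_one_idem[OF es_se[OF x]] by simp
    finally show ?thesis .
  qed
  show ?thesis unfolding projection_family_def using cp bij fam by blast
qed

lemma B2_comp:
  assumes pf: "projection_family \<alpha> P" and re: "\<And>x. 0 \<le> x \<Longrightarrow> range (\<alpha> x) = corner (\<alpha> x 1)"
    and x: "0 \<le> x" and y: "0 \<le> y"
  shows "Lc (\<alpha> (x + y)) (P (x + y)) a = Lc (\<alpha> y) (P y) (Lc (\<alpha> x) (P x) a)"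
proof -
  have xy: "0 \<le> x + y" using x y by simp
  have cp: "central_projection (P z)" if "0 \<le> z" for z using pf that by (simp add: projection_family_def)
  have bij: "bij_betw (\<alpha> z) (range ((*) (P z))) (range (\<alpha> z))" if "0 \<le> z" for z
    using pf that by (simp add: projection_family_def)
  have fam: "\<alpha> u (P (u + v)) = \<alpha> u 1 * P v" if "0 \<le> u" "0 \<le> v" for u v
    using pf that by (simp add: projection_family_def)
  note sex = es_se[OF x] and sey = es_se[OF y]
  define w where "w = Lc (\<alpha> x) (P x) a"
  define z where "z = Lc (\<alpha> y) (P y) w"
  have w1: "P x * w = w" unfolding w_def by (rule Lc_Q[OF sex cp[OF x] bij[OF x] re[OF x]])
  have w2: "\<alpha> x w = \<alpha> x 1 * a * \<alpha> x 1" unfolding w_def by (rule Lc_f[OF sex cp[OF x] bij[OF x] re[OF x]])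
  have z1: "P y * z = z" unfolding z_def by (rule Lc_Q[OF sey cp[OF y] bij[OF y] re[OF y]])
  have z2: "\<alpha> y z = \<alpha> y 1 * w * \<alpha> y 1" unfolding z_def by (rule Lc_f[OF sey cp[OF y] bij[OF y] re[OF y]])
  define e where "e = \<alpha> x (\<alpha> y 1)"
  have exy: "\<alpha> (x + y) 1 = e" using es_comp[OF x y] by (simp add: e_def)
  have e1: "e * \<alpha> x 1 = e" "\<alpha> x 1 * e = e"
    using se_one_right[OF sex] se_one_left[OF sex] by (simp_all add: e_def)
  have f1: "\<alpha> (x + y) z = e * a * e"
  proof -
    have "\<alpha> (x + y) z = \<alpha> x (\<alpha> y z)" using es_comp[OF x y] by simp
    also have "\<dots> = e * (\<alpha> x 1 * a * \<alpha> x 1) * e" by (simp add: z2 se_mult[OF sex] w2 e_def)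
    also have "\<dots> = (e * \<alpha> x 1) * a * (\<alpha> x 1 * e)" by (simp add: mult.assoc)
    finally show ?thesis using e1 by simp
  qed
  have f2: "P (x + y) * z = z"
  proof -
    define r where "r = (1 - P (x + y)) * z"
    have rin: "P y * r = r"
    proof -
      have c: "P y * (1 - P (x + y)) = (1 - P (x + y)) * P y" by (rule cproj_comm[OF cp[OF y]])
      have "P y * r = (P y * (1 - P (x + y))) * z" by (simp add: r_def mult.assoc)
      also have "\<dots> = (1 - P (x + y)) * (P y * z)" by (simp only: c mult.assoc)
      finally have "P y * r = (1 - P (x + y)) * (P y * z)" .
      then show ?thesis using z1 by (simp add: r_def)
    qed
    have "\<alpha> y (P (x + y)) = \<alpha> y 1 * P x" using fam[OF y x] by (simp add: add.commute)
    then have a1: "\<alpha> y (1 - P (x + y)) = \<alpha> y 1 * (1 - P x)" by (simp add: se_diff[OF sey] algebra_simps)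
    have "\<alpha> y r = \<alpha> y 1 * (1 - P x) * (\<alpha> y 1 * w * \<alpha> y 1)" by (simp add: r_def se_mult[OF sey] a1 z2)
    also have "\<dots> = \<alpha> y 1 * ((1 - P x) * \<alpha> y 1) * w * \<alpha> y 1" by (simp add: mult.assoc)
    also have "(1 - P x) * \<alpha> y 1 = \<alpha> y 1 * (1 - P x)"
      using cproj_comm[OF cp[OF x], of "\<alpha> y 1"] by (simp add: algebra_simps)
    also have "\<alpha> y 1 * (\<alpha> y 1 * (1 - P x)) * w * \<alpha> y 1 = \<alpha> y 1 * \<alpha> y 1 * ((1 - P x) * w) * \<alpha> y 1"
      by (simp add: mult.assoc)
    also have "(1 - P x) * w = 0" using w1 by (simp add: algebra_simps)
    finally have "\<alpha> y (P y * r) = 0" using rin by simp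
    then have "P y * r = 0" by (rule pj_inj[OF sey cp[OF y] bij[OF y]])
    then have "r = 0" using rin by simp
    then show ?thesis by (simp add: r_def algebra_simps)
  qed
  have "Lc (\<alpha> (x + y)) (P (x + y)) a = z"
  proof (rule Lc_eq[OF es_se[OF xy] cp[OF xy] bij[OF xy] re[OF xy]])
    show "z \<in> range ((*) (P (x + y)))" using f2 cproj_range_iff[OF cp[OF xy]] by blast
    show "\<alpha> (x + y) z = \<alpha> (x + y) 1 * a * \<alpha> (x + y) 1" using f1 exy by simp
  qed
  then show ?thesis by (simp add: z_def w_def)
qed

lemma B2: assumes pf: "projection_family \<alpha> P" and re: "\<And>x. 0 \<le> x \<Longrightarrow> range (\<alpha> x) = corner (\<alpha> x 1)"
  shows "nondegenerate_transfer_action \<alpha> (\<lambda>x. Lc (\<alpha> x) (P x))"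
proof -
  have cp: "central_projection (P z)" if "0 \<le> z" for z using pf that by (simp add: projection_family_def)
  have bij: "bij_betw (\<alpha> z) (range ((*) (P z))) (range (\<alpha> z))" if "0 \<le> z" for z
    using pf that by (simp add: projection_family_def)
  have ta: "ta1 (\<alpha> x) (Lc (\<alpha> x) (P x))" if "0 \<le> x" for x
    by (rule Lc_ta1[OF es_se[OF that] cp[OF that] bij[OF that] re[OF that]])
  have tr: "transfer_action \<alpha> (\<lambda>x. Lc (\<alpha> x) (P x))"
    unfolding transfer_action_def
  proof (intro conjI allI impI)
    fix x :: 'g assume x: "0 \<le> x"
    show "continuous_on UNIV (Lc (\<alpha> x) (P x))" by (rule Lc_cont[OF es_se[OF x] cp[OF x] bij[OF x] re[OF x]])
    show "clinear_map (Lc (\<alpha> x) (P x))" using ta[OF x] by (simp add: ta1_def)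
    show "positive_map (Lc (\<alpha> x) (P x))" using ta[OF x] by (simp add: ta1_def)
  next
    fix x y :: 'g assume "0 \<le> x" "0 \<le> y"
    then show "Lc (\<alpha> (x + y)) (P (x + y)) = Lc (\<alpha> y) (P y) \<circ> Lc (\<alpha> x) (P x)"
      using B2_comp[OF pf re] by (auto simp: fun_eq_iff)
  next
    fix x :: 'g and a b assume x: "0 \<le> x"
    show "Lc (\<alpha> x) (P x) (\<alpha> x a * b) = a * Lc (\<alpha> x) (P x) b" using ta[OF x] by (simp add: ta1_def)
  qed
  have "\<alpha> x \<circ> Lc (\<alpha> x) (P x) \<circ> \<alpha> x = \<alpha> x" if x: "0 \<le> x" for x
    using cp_nd[OF es_se[OF x] Lc_cp1[OF es_se[OF x] cp[OF x] bij[OF x] re[OF x]]] by (auto simp: nd1_def)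
  then show ?thesis using tr by (simp add: nondegenerate_transfer_action_def)
qed

lemma U: assumes nd: "nondegenerate_transfer_action \<alpha> L" "nondegenerate_transfer_action \<alpha> L'"
  and re: "\<And>x. 0 \<le> x \<Longrightarrow> range (\<alpha> x) = corner (\<alpha> x 1)" and x: "0 \<le> x"
  shows "L x = L' x"
proof -
  have tr: "transfer_action \<alpha> L" "transfer_action \<alpha> L'" using nd by (simp_all add: nondegenerate_transfer_action_def)
  note t1 = tr_ta1[OF tr(1) x] and t2 = tr_ta1[OF tr(2) x]
  note n1 = nd_nd1[OF nd(1) x] and n2 = nd_nd1[OF nd(2) x]
  have c1: "cp1 (\<alpha> x) (L x)" by (rule cp_cp1[OF A5[OF nd(1) re] x])
  have c2: "cp1 (\<alpha> x) (L' x)" by (rule cp_cp1[OF A5[OF nd(2) re] x])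
  have pp: "L x 1 = L' x 1"
    by (rule pj_unique[OF es_se[OF x] nd_cproj[OF t1 n1] nd_bij[OF t1 n1] nd_cproj[OF t2 n2] nd_bij[OF t2 n2]])
  show ?thesis
  proof
    fix a
    have i1: "L x a \<in> range ((*) (L x 1))" by (subst nd_range[OF t1 n1, of a]) (rule rangeI)
    have "L' x a \<in> range ((*) (L' x 1))" by (subst nd_range[OF t2 n2, of a]) (rule rangeI)
    then have i2: "L' x a \<in> range ((*) (L x 1))" using pp by simp
    have "\<alpha> x (L x a) = \<alpha> x (L' x a)" using c1 c2 by (simp add: cp1_def)
    then show "L x a = L' x a"
      by (rule pj_inj_eq[OF es_se[OF x] nd_cproj[OF t1 n1] nd_bij[OF t1 n1] i1 i2])
  qed
qed

end

theorem theorem2p4: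
  fixes \<alpha> :: "'g::linordered_ab_group_add \<Rightarrow> 'a::cstar_algebra \<Rightarrow> 'a"
  assumes "endo_semigroup \<alpha>"
  shows "((\<exists>L. complete_transfer_action \<alpha> L) \<longleftrightarrow>
            ((\<exists>L. nondegenerate_transfer_action \<alpha> L)
             \<and> (\<forall>x. 0 \<le> x \<longrightarrow> hereditary_subalgebra (range (\<alpha> x)))))
       \<and> (((\<exists>L. nondegenerate_transfer_action \<alpha> L)
             \<and> (\<forall>x. 0 \<le> x \<longrightarrow> hereditary_subalgebra (range (\<alpha> x)))) \<longleftrightarrow>
          ((\<exists>P. projection_family \<alpha> P)
             \<and> (\<forall>x. 0 \<le> x \<longrightarrow> range (\<alpha> x) = {\<alpha> x 1 * a * \<alpha> x 1 | a. True})))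
       \<and> ((\<exists>L. complete_transfer_action \<alpha> L) \<longrightarrow>
            (\<forall>L L'. (complete_transfer_action \<alpha> L \<or> nondegenerate_transfer_action \<alpha> L)
                  \<and> (complete_transfer_action \<alpha> L' \<or> nondegenerate_transfer_action \<alpha> L')
                  \<longrightarrow> (\<forall>x. 0 \<le> x \<longrightarrow> L x = L' x))
          \<and> (\<forall>P P'. projection_family \<alpha> P \<and> projection_family \<alpha> P'
                  \<longrightarrow> (\<forall>x. 0 \<le> x \<longrightarrow> P x = P' x))
          \<and> (\<forall>L P. (complete_transfer_action \<alpha> L \<or> nondegenerate_transfer_action \<alpha> L)
                  \<and> projection_family \<alpha> P
                  \<longrightarrow> (\<forall>x. 0 \<le> x \<longrightarrow> P x = L x 1
                        \<and> (\<forall>a. L x a = the_inv_into (range (\<lambda>b. P x * b)) (\<alpha> x)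
                                          (\<alpha> x 1 * a * \<alpha> x 1)))))"
proof -
  note es = assms
  have cdef: "{\<alpha> x 1 * a * \<alpha> x 1 | a. True} = corner (\<alpha> x 1)" for x by (simp add: corner_def)
  have AB: "(\<exists>L. complete_transfer_action \<alpha> L) \<longleftrightarrow>
            ((\<exists>L. nondegenerate_transfer_action \<alpha> L)
             \<and> (\<forall>x. 0 \<le> x \<longrightarrow> hereditary_subalgebra (range (\<alpha> x))))"
  proof
    assume "\<exists>L. complete_transfer_action \<alpha> L"
    then obtain L where L: "complete_transfer_action \<alpha> L" by blast
    show "(\<exists>L. nondegenerate_transfer_action \<alpha> L) \<and> (\<forall>x. 0 \<le> x \<longrightarrow> hereditary_subalgebra (range (\<alpha> x)))"
      using A1[OF es L] A3[OF es _ A2[OF es L]] by blast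
  next
    assume h: "(\<exists>L. nondegenerate_transfer_action \<alpha> L) \<and> (\<forall>x. 0 \<le> x \<longrightarrow> hereditary_subalgebra (range (\<alpha> x)))"
    then obtain L where L: "nondegenerate_transfer_action \<alpha> L" by blast
    have re: "range (\<alpha> x) = corner (\<alpha> x 1)" if "0 \<le> x" for x using A4[OF es that] h that by blast
    show "\<exists>L. complete_transfer_action \<alpha> L" using A5[OF es L re] by blast
  qed
  have BC: "((\<exists>L. nondegenerate_transfer_action \<alpha> L)
             \<and> (\<forall>x. 0 \<le> x \<longrightarrow> hereditary_subalgebra (range (\<alpha> x)))) \<longleftrightarrow>
          ((\<exists>P. projection_family \<alpha> P)
             \<and> (\<forall>x. 0 \<le> x \<longrightarrow> range (\<alpha> x) = {\<alpha> x 1 * a * \<alpha> x 1 | a. True}))"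
  proof
    assume h: "(\<exists>L. nondegenerate_transfer_action \<alpha> L) \<and> (\<forall>x. 0 \<le> x \<longrightarrow> hereditary_subalgebra (range (\<alpha> x)))"
    then obtain L where L: "nondegenerate_transfer_action \<alpha> L" by blast
    have re: "range (\<alpha> x) = corner (\<alpha> x 1)" if "0 \<le> x" for x using A4[OF es that] h that by blast
    show "(\<exists>P. projection_family \<alpha> P) \<and> (\<forall>x. 0 \<le> x \<longrightarrow> range (\<alpha> x) = {\<alpha> x 1 * a * \<alpha> x 1 | a. True})"
      using B1[OF es L re] re unfolding cdef by blast
  next
    assume h: "(\<exists>P. projection_family \<alpha> P) \<and> (\<forall>x. 0 \<le> x \<longrightarrow> range (\<alpha> x) = {\<alpha> x 1 * a * \<alpha> x 1 | a. True})"
    then obtain P where P: "projection_family \<alpha> P" by blast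
    have re: "range (\<alpha> x) = corner (\<alpha> x 1)" if "0 \<le> x" for x using h that unfolding cdef by blast
    show "(\<exists>L. nondegenerate_transfer_action \<alpha> L) \<and> (\<forall>x. 0 \<le> x \<longrightarrow> hereditary_subalgebra (range (\<alpha> x)))"
      using B2[OF es P re] A3[OF es _ re] by blast
  qed
  have CC: "(\<exists>L. complete_transfer_action \<alpha> L) \<longrightarrow>
            (\<forall>L L'. (complete_transfer_action \<alpha> L \<or> nondegenerate_transfer_action \<alpha> L)
                  \<and> (complete_transfer_action \<alpha> L' \<or> nondegenerate_transfer_action \<alpha> L')
                  \<longrightarrow> (\<forall>x. 0 \<le> x \<longrightarrow> L x = L' x))
          \<and> (\<forall>P P'. projection_family \<alpha> P \<and> projection_family \<alpha> P'
                  \<longrightarrow> (\<forall>x. 0 \<le> x \<longrightarrow> P x = P' x))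
          \<and> (\<forall>L P. (complete_transfer_action \<alpha> L \<or> nondegenerate_transfer_action \<alpha> L)
                  \<and> projection_family \<alpha> P
                  \<longrightarrow> (\<forall>x. 0 \<le> x \<longrightarrow> P x = L x 1
                        \<and> (\<forall>a. L x a = the_inv_into (range (\<lambda>b. P x * b)) (\<alpha> x)
                                          (\<alpha> x 1 * a * \<alpha> x 1))))"
  proof
    assume "\<exists>L. complete_transfer_action \<alpha> L"
    then obtain L0 where L0: "complete_transfer_action \<alpha> L0" by blast
    have re: "range (\<alpha> x) = corner (\<alpha> x 1)" if "0 \<le> x" for x by (rule A2[OF es L0 that])
    have ndof: "nondegenerate_transfer_action \<alpha> L"
      if "complete_transfer_action \<alpha> L \<or> nondegenerate_transfer_action \<alpha> L" for L
      using that A1[OF es] by blast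
    have c1: "\<forall>L L'. (complete_transfer_action \<alpha> L \<or> nondegenerate_transfer_action \<alpha> L)
                  \<and> (complete_transfer_action \<alpha> L' \<or> nondegenerate_transfer_action \<alpha> L')
                  \<longrightarrow> (\<forall>x. 0 \<le> x \<longrightarrow> L x = L' x)"
      using U[OF es ndof ndof re] by blast
    have c2: "\<forall>P P'. projection_family \<alpha> P \<and> projection_family \<alpha> P'
                  \<longrightarrow> (\<forall>x. 0 \<le> x \<longrightarrow> P x = P' x)"
    proof (intro allI impI)
      fix P P' :: "'g \<Rightarrow> 'a" and x :: 'g assume h: "projection_family \<alpha> P \<and> projection_family \<alpha> P'" and x: "0 \<le> x"
      then show "P x = P' x"
        using pj_unique[OF es_se[OF es x]] unfolding projection_family_def by blast
    qed
    have c3: "\<forall>L P. (complete_transfer_action \<alpha> L \<or> nondegenerate_transfer_action \<alpha> L)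
                  \<and> projection_family \<alpha> P
                  \<longrightarrow> (\<forall>x. 0 \<le> x \<longrightarrow> P x = L x 1
                        \<and> (\<forall>a. L x a = the_inv_into (range (\<lambda>b. P x * b)) (\<alpha> x)
                                          (\<alpha> x 1 * a * \<alpha> x 1)))"
    proof (intro allI impI conjI)
      fix L :: "'g \<Rightarrow> 'a \<Rightarrow> 'a" and P :: "'g \<Rightarrow> 'a" and x :: 'g assume h: "(complete_transfer_action \<alpha> L \<or> nondegenerate_transfer_action \<alpha> L) \<and> projection_family \<alpha> P"
        and x: "0 \<le> x"
      have nd: "nondegenerate_transfer_action \<alpha> L" using ndof h by blast
      have tr: "transfer_action \<alpha> L" using nd by (simp add: nondegenerate_transfer_action_def)
      note t1 = tr_ta1[OF es tr x] and n1 = nd_nd1[OF es nd x]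
      have cpP: "central_projection (P x)" and bijP: "bij_betw (\<alpha> x) (range ((*) (P x))) (range (\<alpha> x))"
        using h x by (simp_all add: projection_family_def)
      show PL: "P x = L x 1"
        by (rule pj_unique[OF es_se[OF es x] cpP bijP nd_cproj[OF t1 n1] nd_bij[OF t1 n1]])
      have c1: "cp1 (\<alpha> x) (L x)" by (rule cp_cp1[OF es A5[OF es nd re] x])
      fix a
      have "L x a \<in> range ((*) (L x 1))" by (subst nd_range[OF t1 n1, of a]) (rule rangeI)
      then have i1: "L x a \<in> range ((*) (P x))" using PL by simp
      have "\<alpha> x (L x a) = \<alpha> x 1 * a * \<alpha> x 1" using c1 by (simp add: cp1_def)
      then have "the_inv_into (range ((*) (P x))) (\<alpha> x) (\<alpha> x 1 * a * \<alpha> x 1) = L x a"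
        by (rule the_inv_into_f_eq[OF bij_betw_imp_inj_on[OF bijP] _ i1])
      then show "L x a = the_inv_into (range (\<lambda>b. P x * b)) (\<alpha> x) (\<alpha> x 1 * a * \<alpha> x 1)"
        by simp
    qed
    show "(\<forall>L L'. (complete_transfer_action \<alpha> L \<or> nondegenerate_transfer_action \<alpha> L)
                  \<and> (complete_transfer_action \<alpha> L' \<or> nondegenerate_transfer_action \<alpha> L')
                  \<longrightarrow> (\<forall>x. 0 \<le> x \<longrightarrow> L x = L' x))
          \<and> (\<forall>P P'. projection_family \<alpha> P \<and> projection_family \<alpha> P'
                  \<longrightarrow> (\<forall>x. 0 \<le> x \<longrightarrow> P x = P' x))
          \<and> (\<forall>L P. (complete_transfer_action \<alpha> L \<or> nondegenerate_transfer_action \<alpha> L)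
                  \<and> projection_family \<alpha> P
                  \<longrightarrow> (\<forall>x. 0 \<le> x \<longrightarrow> P x = L x 1
                        \<and> (\<forall>a. L x a = the_inv_into (range (\<lambda>b. P x * b)) (\<alpha> x)
                                          (\<alpha> x 1 * a * \<alpha> x 1))))"
      by (rule conjI[OF c1 conjI[OF c2 c3]])
  qed
  show ?thesis by (rule conjI[OF AB conjI[OF BC CC]])
qed


end
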